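(* Let $p>3$ and $q>6p^4$ be primes, $G=\mathbb{Z}_6^5\times\mathbb{Z}_q$, $H=\mathbb{Z}_p^4$, $A\subset G$ the set defined in the context, $B\subset H$ a spectral set with $|B|=2p$, $\{v_1,\dots,v_4\}$ a basis of $H$ over $\mathbb{Z}_p$, and $t:A\to H$ given by $t(0_{\mathbb{Z}_6^5},k)=v_k$ for $1\le k\le4$ and $t(a)=0_H$ otherwise. Then $P_t=\bigcup_{a\in A}\{a\}\times(t(a)+B)$ is not spectral in $G\times H$.
   Context: A subset $X$ of a finite abelian group $E$ is spectral if there is a set $S$ of characters of $E$ with $|S|=|X|$ and $\hat 1_X(s-s')=0$ for all distinct $s,s'\in S$, where $\hat f(\chi)=\sum_x f(x)\chi(x)$. Characters of $G\times H$ are identified with vectors $(\gamma_1,\gamma_2,\rho)\in\mathbb{Z}_6^5\times\mathbb{Z}_q\times\mathbb{Z}_p^4$ acting by $(u_1,u_2,w)\mapsto e^{2\pi i(\langle\gamma_1,u_1\rangle/6+\gamma_2u_2/q+\langle\rho,w\rangle/p)}$. Construction of $A$: let $v=(1,2,3,4,5)\in\mathbb{Z}_6^5$; for $\pi\in S_5$ let $\pi(v)$ be the vector with permuted coordinates and $A_\pi=\{x\in\mathbb{Z}_6^5:\langle \pi(v),x\rangle\equiv 0\pmod 6\}$. Enumerate $S_5$ as $\pi_0,\dots,\pi_{119}$; for $0\le k\le119$ set $A_k=A_{\pi_k}\times\{k\}$, for $120\le k\le q-1$ set $A_k=A_{\pi_0}\times\{k\}$, and $A=\bigcup_{k=0}^{q-1}A_k$.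 Known fact (may be used): $A$ is a tile of $G$ but is not spectral in $G$. *)

theory Defs
  imports Complex_Main "HOL-Combinatorics.Permutations" "HOL-Computational_Algebra.Primes"
begin

text \<open>A finite abelian group Z_{m_0} x ... x Z_{m_{n-1}} is represented by the list of
  moduli ms; its elements are integer lists x of length n with 0 <= x!i < ms!i.
  Characters are identified with elements of the same set, chi acting on x by
  exp(2 pi i sum_i chi_i x_i / m_i).\<close>

definition cgrp :: "int list \<Rightarrow> int list set" where
  "cgrp ms = {x. length x = length ms \<and> (\<forall>i<length ms. 0 \<le> x!i \<and> x!i < ms!i)}"

definition cpair :: "int list \<Rightarrow> int list \<Rightarrow> int list \<Rightarrow> complex" where
  "cpair ms chi x = cis (2 * pi * (\<Sum>i<length ms. of_int (chi!i * x!i) / of_int (ms!i)))"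

definition cadd :: "int list \<Rightarrow> int list \<Rightarrow> int list \<Rightarrow> int list" where
  "cadd ms x y = map (\<lambda>i. (x!i + y!i) mod ms!i) [0..<length ms]"

definition csub :: "int list \<Rightarrow> int list \<Rightarrow> int list \<Rightarrow> int list" where
  "csub ms x y = map (\<lambda>i. (x!i - y!i) mod ms!i) [0..<length ms]"

definition ft_ind :: "int list \<Rightarrow> int list set \<Rightarrow> int list \<Rightarrow> complex" where
  "ft_ind ms X chi = (\<Sum>x\<in>X. cpair ms chi x)"

definition spectral_in :: "int list \<Rightarrow> int list set \<Rightarrow> bool" where
  "spectral_in ms X \<longleftrightarrow> X \<subseteq> cgrp ms \<and>
     (\<exists>S. S \<subseteq> cgrp ms \<and> card S = card X \<and>
          (\<forall>s\<in>S. \<forall>s'\<in>S. s \<noteq> s' \<longrightarrow> ft_ind ms X (csub ms s s') = 0))"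

definition msG :: "int \<Rightarrow> int list" where "msG q = replicate 5 6 @ [q]"
definition msH :: "int \<Rightarrow> int list" where "msH p = replicate 4 p"
definition msGH :: "int \<Rightarrow> int \<Rightarrow> int list" where "msGH q p = msG q @ msH p"

text \<open>A_pi = {x in Z_6^5 : <pi(v), x> = 0 mod 6}, v = (1,..,5), (pi(v))_i = v_{pi(i)}
  with coordinates indexed 0..4, so v_j = j+1.\<close>
definition Api :: "(nat \<Rightarrow> nat) \<Rightarrow> int list set" where
  "Api \<sigma> = {x \<in> cgrp (replicate 5 6). (\<Sum>i<5. int (\<sigma> i + 1) * x!i) mod 6 = 0}"

text \<open>enum k = pi_k, an enumeration of S_5 (permutations of {0..4}).\<close>
definition setA :: "(nat \<Rightarrow> nat \<Rightarrow> nat) \<Rightarrow> int \<Rightarrow> int list set" where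
  "setA enum q = {x @ [k] | x k. 0 \<le> k \<and> k < q \<and>
      x \<in> Api (enum (if k < 120 then nat k else 0))}"

definition lincombH :: "int \<Rightarrow> (nat \<Rightarrow> int list) \<Rightarrow> (nat \<Rightarrow> int) \<Rightarrow> int list" where
  "lincombH p v c = map (\<lambda>i. (\<Sum>j\<in>{1..4}. c j * (v j)!i) mod p) [0..<4]"

definition basisH :: "int \<Rightarrow> (nat \<Rightarrow> int list) \<Rightarrow> bool" where
  "basisH p v \<longleftrightarrow> (\<forall>j\<in>{1..4}. v j \<in> cgrp (msH p)) \<and>
     (\<forall>h\<in>cgrp (msH p). \<exists>c. (\<forall>j\<in>{1..4}. 0 \<le> c j \<and> c j < p) \<and> lincombH p v c = h) \<and>
     (\<forall>c. (\<forall>j\<in>{1..4}. 0 \<le> c j \<and> c j < p) \<and> lincombH p v c = replicate 4 0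
            \<longrightarrow> (\<forall>j\<in>{1..4}. c j = 0))"

definition tmap :: "(nat \<Rightarrow> int list) \<Rightarrow> int list \<Rightarrow> int list" where
  "tmap v a = (if take 5 a = replicate 5 0 \<and> 1 \<le> a!5 \<and> a!5 \<le> 4
               then v (nat (a!5)) else replicate 4 0)"

definition Pt :: "int \<Rightarrow> int list set \<Rightarrow> (int list \<Rightarrow> int list) \<Rightarrow> int list set \<Rightarrow> int list set" where
  "Pt p A t B = {a @ cadd (msH p) (t a) b | a b. a \<in> A \<and> b \<in> B}"

end

theory Submission
  imports Defs "HOL-Library.Real_Mod"
begin

lemma cis_2pi_int: "cis (2 * pi * of_int n) = 1"
  by simp

lemma cpair_csub:
  assumes "length s \<ge> length ms" "length s' \<ge> length ms" "\<forall>i<length ms. ms!i \<noteq> 0"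
  shows "cpair ms (csub ms s s') x = cpair ms s x * cnj (cpair ms s' x)"
proof -
  have "\<forall>i<length ms. \<exists>t::int. (s!i - s'!i) mod ms!i = s!i - s'!i + ms!i * t"
  proof (intro allI impI)
    fix i assume "i < length ms"
    show "\<exists>t::int. (s!i - s'!i) mod ms!i = s!i - s'!i + ms!i * t"
      by (rule exI[of _ "- ((s!i - s'!i) div ms!i)"]) (simp add: minus_mult_div_eq_mod[symmetric])
  qed
  then obtain t where t: "\<And>i. i<length ms \<Longrightarrow> (s!i - s'!i) mod ms!i = s!i - s'!i + ms!i * t i"
    by metis
  have eq: "(\<Sum>i<length ms. of_int ((csub ms s s')!i * x!i) / of_int (ms!i) :: real)
      = (\<Sum>i<length ms. of_int (s!i * x!i) / of_int (ms!i)) - (\<Sum>i<length ms. of_int (s'!i * x!i) / of_int (ms!i))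
        + of_int (\<Sum>i<length ms. t i * x!i)"
    unfolding of_int_sum sum_subtractf[symmetric] sum.distrib[symmetric]
  proof (rule sum.cong[OF refl])
    fix i assume "i \<in> {..<length ms}"
    hence i: "i < length ms" by simp
    have h: "(csub ms s s')!i = s!i - s'!i + ms!i * t i" using t[OF i] i by (simp add: csub_def)
    have "ms!i \<noteq> 0" using assms(3) i by simp
    thus "of_int ((csub ms s s')!i * x!i) / of_int (ms!i) = of_int (s!i * x!i) / of_int (ms!i) -
         of_int (s'!i * x!i) / of_int (ms!i) + (of_int (t i * x!i) :: real)"
      unfolding h by (simp add: field_simps)
  qed
  define X :: real where "X = (\<Sum>i<length ms. of_int (s!i * x!i) / of_int (ms!i))"
  define Y :: real where "Y = (\<Sum>i<length ms. of_int (s'!i * x!i) / of_int (ms!i))"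
  define T where "T = (\<Sum>i<length ms. t i * x!i)"
  have "cis (2 * pi * (X - Y + of_int T)) = cis (2*pi*X) * cis (-(2*pi*Y)) * cis (2 * pi * of_int T)"
    by (simp add: cis_mult algebra_simps)
  also have "\<dots> = cis (2*pi*X) * cnj (cis (2*pi*Y))" by (simp add: cis_cnj)
  finally show ?thesis unfolding cpair_def eq X_def[symmetric] Y_def[symmetric] T_def[symmetric] .
qed

definition PS :: "nat \<Rightarrow> (nat \<Rightarrow> 'a set) \<Rightarrow> 'a list set" where
  "PS n F = {xs. length xs = n \<and> (\<forall>i<n. xs!i \<in> F i)}"

lemma PS_0: "PS 0 F = {[]}" by (auto simp: PS_def)

lemma PS_Suc: "PS (Suc n) F = (\<lambda>(a,xs). a#xs) ` (F 0 \<times> PS n (\<lambda>i. F (Suc i)))"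
proof (rule set_eqI)
  fix xs show "xs \<in> PS (Suc n) F \<longleftrightarrow> xs \<in> (\<lambda>(a,xs). a#xs) ` (F 0 \<times> PS n (\<lambda>i. F (Suc i)))"
  proof
    assume "xs \<in> PS (Suc n) F"
    then obtain a ys where xs: "xs = a#ys" and "length ys = n" and h: "\<forall>i<Suc n. xs!i \<in> F i"
      by (cases xs) (auto simp: PS_def)
    then show "xs \<in> (\<lambda>(a,xs). a#xs) ` (F 0 \<times> PS n (\<lambda>i. F (Suc i)))"
      by (force simp: PS_def)
  next
    assume "xs \<in> (\<lambda>(a,xs). a#xs) ` (F 0 \<times> PS n (\<lambda>i. F (Suc i)))"
    then show "xs \<in> PS (Suc n) F" by (auto simp: PS_def less_Suc_eq_0_disj)
  qed
qed

lemma finite_PS: "(\<And>i. i < n \<Longrightarrow> finite (F i)) \<Longrightarrow> finite (PS n F)"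
proof (induction n arbitrary: F)
  case 0 then show ?case by (simp add: PS_0)
next
  case (Suc n) then show ?case by (simp add: PS_Suc)
qed

lemma sum_PS:
  assumes "\<And>i. i < n \<Longrightarrow> finite (F i)"
  shows "(\<Sum>xs\<in>PS n F. \<Prod>i<n. (\<phi> i (xs!i) :: 'b::comm_semiring_1)) = (\<Prod>i<n. \<Sum>t\<in>F i. \<phi> i t)"
  using assms
proof (induction n arbitrary: F \<phi>)
  case 0 then show ?case by (simp add: PS_0)
next
  case (Suc n)
  have inj: "inj_on (\<lambda>(a,xs). a#xs) (F 0 \<times> PS n (\<lambda>i. F (Suc i)))" by (auto simp: inj_on_def)
  have IH: "(\<Sum>xs\<in>PS n (\<lambda>i. F (Suc i)). \<Prod>i<n. \<phi> (Suc i) (xs!i)) = (\<Prod>i<n. \<Sum>t\<in>F (Suc i). \<phi> (Suc i) t)"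
    using Suc.IH[of "\<lambda>i. F (Suc i)" "\<lambda>i. \<phi> (Suc i)"] Suc.prems by simp
  have "(\<Sum>xs\<in>PS (Suc n) F. \<Prod>i<Suc n. \<phi> i (xs!i))
      = (\<Sum>(a,xs)\<in>F 0 \<times> PS n (\<lambda>i. F (Suc i)). \<Prod>i<Suc n. \<phi> i ((a#xs)!i))"
    unfolding PS_Suc by (subst sum.reindex[OF inj]) (simp add: case_prod_unfold)
  also have "\<dots> = (\<Sum>(a,xs)\<in>F 0 \<times> PS n (\<lambda>i. F (Suc i)). \<phi> 0 a * (\<Prod>i<n. \<phi> (Suc i) (xs!i)))"
    by (intro sum.cong refl) (clarsimp simp del: prod.lessThan_Suc simp add: prod.lessThan_Suc_shift)
  also have "\<dots> = (\<Sum>a\<in>F 0. \<phi> 0 a) * (\<Sum>xs\<in>PS n (\<lambda>i. F (Suc i)). \<Prod>i<n. \<phi> (Suc i) (xs!i))"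
    by (simp add: sum_product sum.cartesian_product)
  also have "\<dots> = (\<Prod>i<Suc n. \<Sum>t\<in>F i. \<phi> i t)"
    unfolding IH by (simp del: prod.lessThan_Suc add: prod.lessThan_Suc_shift)
  finally show ?case .
qed

lemma card_PS:
  assumes "\<And>i. i < n \<Longrightarrow> finite (F i)"
  shows "card (PS n F) = (\<Prod>i<n. card (F i))"
  using sum_PS[OF assms, where \<phi>="\<lambda>_ _. (1::nat)"] by simp

lemma cgrp_PS: "cgrp ms = PS (length ms) (\<lambda>i. {0..<ms!i})"
  by (auto simp: cgrp_def PS_def)

lemma finite_cgrp: "finite (cgrp ms)"
  unfolding cgrp_PS by (rule finite_PS) simp

lemma cis_sum: "finite I \<Longrightarrow> cis (\<Sum>i\<in>I. f i) = (\<Prod>i\<in>I. cis (f i))"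
  by (induction I rule: finite_induct) (auto simp: cis_mult[symmetric])

lemma cis_int_eq_1: "cis (2 * pi * of_int a / of_int m) = 1 \<longleftrightarrow> m dvd a" if "m > 0" for a m :: int
proof
  assume "m dvd a" then obtain k where "a = m * k" by auto
  then have "2 * pi * of_int a / of_int m = 2 * pi * real_of_int k" using that by simp
  then show "cis (2 * pi * of_int a / of_int m) = 1" by simp
next
  assume "cis (2 * pi * of_int a / of_int m) = 1"
  then obtain n where n: "2 * pi * of_int a / of_int m = of_int n * (2 * pi)" by (auto simp: cis_eq_1_iff)
  hence "real_of_int a = of_int n * of_int m" using that by (simp add: field_simps)
  hence "a = n * m" by (metis of_int_eq_iff of_int_mult)
  thus "m dvd a" by simp
qed

lemma geom_roots:
  fixes m :: int and a :: int assumes "m > 0"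
  shows "(\<Sum>t\<in>{0..<m}. cis (2 * pi * of_int (a * t) / of_int m)) = (if m dvd a then of_int m else 0)"
proof -
  define z where "z = cis (2 * pi * of_int a / of_int m)"
  have tm: "cis (2 * pi * of_int (a * t) / of_int m) = z ^ nat t" if "t \<ge> 0" for t
    using that by (simp add: z_def DeMoivre algebra_simps)
  have "(\<Sum>t\<in>{0..<m}. cis (2 * pi * of_int (a * t) / of_int m)) = (\<Sum>t\<in>{0..<m}. z ^ nat t)"
    by (intro sum.cong refl tm) auto
  also have "\<dots> = (\<Sum>t<nat m. z ^ t)"
  proof -
    have "{0..<m} = int ` {..<nat m}" using assms by (auto simp: image_iff intro!: bexI[of _ "nat _"])
    moreover have "inj_on int {..<nat m}" by simp
    ultimately show ?thesis by (simp add: sum.reindex)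
  qed
  finally have eq: "(\<Sum>t\<in>{0..<m}. cis (2 * pi * of_int (a * t) / of_int m)) = (\<Sum>t<nat m. z ^ t)" .
  show ?thesis
  proof (cases "m dvd a")
    case True
    then have "z = 1" using cis_int_eq_1[OF assms] by (simp add: z_def)
    then show ?thesis using eq True assms by simp
  next
    case False
    then have "z \<noteq> 1" using cis_int_eq_1[OF assms] by (simp add: z_def)
    moreover have "z ^ nat m = 1" using assms by (simp add: z_def DeMoivre)
    ultimately have "(\<Sum>t<nat m. z ^ t) = 0" by (simp add: geometric_sum)
    then show ?thesis using eq False by simp
  qed
qed

lemma cgrp_rep: "cgrp (replicate n m) = PS n (\<lambda>_. {0..<m})"
  by (auto simp: cgrp_def PS_def)

lemma cpair_prod: "cpair ms c x = (\<Prod>i<length ms. cis (2 * pi * (of_int (c!i * x!i) / of_int (ms!i))))"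
  unfolding cpair_def sum_distrib_left by (simp add: cis_sum)

lemma char_sum_rep:
  fixes m :: int assumes "m > 0"
  shows "(\<Sum>x\<in>cgrp (replicate n m). cpair (replicate n m) \<eta> x)
        = (if \<forall>i<n. m dvd \<eta>!i then of_int m ^ n else 0)"
proof -
  have "(\<Sum>x\<in>cgrp (replicate n m). cpair (replicate n m) \<eta> x)
      = (\<Sum>x\<in>PS n (\<lambda>_. {0..<m}). \<Prod>i<n. (\<lambda>i t. cis (2 * pi * of_int (\<eta>!i * t) / of_int m)) i (x!i))"
    unfolding cgrp_rep cpair_prod by (intro sum.cong refl prod.cong) auto
  also have "\<dots> = (\<Prod>i<n. \<Sum>t\<in>{0..<m}. cis (2 * pi * of_int (\<eta>!i * t) / of_int m))"
    by (rule sum_PS) simp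
  also have "\<dots> = (\<Prod>i<n. if m dvd \<eta>!i then of_int m else 0)"
    using geom_roots[OF assms] by simp
  also have "\<dots> = (if \<forall>i<n. m dvd \<eta>!i then of_int m ^ n else 0)"
    by (auto simp: prod_zero_iff)
  finally show ?thesis .
qed

definition W :: "(nat \<Rightarrow> nat) \<Rightarrow> int list" where
  "W \<sigma> = map (\<lambda>i. int (\<sigma> i + 1)) [0..<5]"

lemma Api_W: "Api \<sigma> = {x \<in> cgrp (replicate 5 6). (\<Sum>i<5. W \<sigma> ! i * x!i) mod 6 = 0}"
  unfolding Api_def W_def by simp

lemma sum_Api:
  "(\<Sum>x\<in>Api \<sigma>. cpair (replicate 5 6) \<gamma> x)
     = of_nat (6^4 * card {c\<in>{0..<6::int}. \<forall>i<5. (6::int) dvd (\<gamma>!i + c * W \<sigma> ! i)})"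
proof -
  let ?G = "cgrp (replicate 5 (6::int))"
  let ?s = "\<lambda>x. (\<Sum>i<5. W \<sigma> ! i * x!i)"
  let ?\<eta> = "\<lambda>c. map (\<lambda>i. \<gamma>!i + c * W \<sigma> ! i) [0..<5]"
  have ind: "(if ?s x mod 6 = 0 then 1 else 0) = (1/6) * (\<Sum>c\<in>{0..<6::int}. cis (2 * pi * of_int (?s x * c) / of_int 6))" for x
    using geom_roots[of 6 "?s x"] by auto
  have comb: "cpair (replicate 5 6) \<gamma> x * cis (2 * pi * of_int (?s x * c) / of_int 6) = cpair (replicate 5 6) (?\<eta> c) x" for x c
  proof -
    have e: "(\<Sum>i<5. of_int (\<gamma>!i * x!i) / of_int 6) + of_int (?s x * c) / of_int 6
        = (\<Sum>i<5. of_int (?\<eta> c ! i * x!i) / (of_int 6 :: real))"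
      by (simp add: sum_divide_distrib[symmetric] algebra_simps) (simp add: sum.distrib sum_distrib_left algebra_simps)
    have "cpair (replicate 5 6) \<gamma> x * cis (2 * pi * of_int (?s x * c) / of_int 6)
       = cis (2 * pi * ((\<Sum>i<5. of_int (\<gamma>!i * x!i) / of_int 6) + of_int (?s x * c) / of_int 6))"
      unfolding cpair_def by (simp add: cis_mult algebra_simps)
    also have "\<dots> = cpair (replicate 5 6) (?\<eta> c) x" unfolding e cpair_def by simp
    finally show ?thesis .
  qed
  have "(\<Sum>x\<in>Api \<sigma>. cpair (replicate 5 6) \<gamma> x)
      = (\<Sum>x\<in>?G. cpair (replicate 5 6) \<gamma> x * (if ?s x mod 6 = 0 then 1 else 0))"
    by (simp add: Api_W sum.inter_filter[OF finite_cgrp, symmetric] if_distrib cong: if_cong)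
  also have "\<dots> = (1/6) * (\<Sum>c\<in>{0..<6::int}. \<Sum>x\<in>?G. cpair (replicate 5 6) (?\<eta> c) x)"
    unfolding ind comb[symmetric] by (simp add: sum_distrib_left sum_distrib_right sum.swap[of _ "{0..<6::int}"] mult.assoc)
  also have "\<dots> = (1/6) * (\<Sum>c\<in>{0..<6::int}. if \<forall>i<5. (6::int) dvd (\<gamma>!i + c * W \<sigma> ! i) then 6^5 else 0)"
    by (simp add: char_sum_rep del: of_int_numeral) (simp cong: if_cong)
  also have "\<dots> = of_nat (6^4 * card {c\<in>{0..<6::int}. \<forall>i<5. (6::int) dvd (\<gamma>!i + c * W \<sigma> ! i)})"
    by (simp add: sum.If_cases Int_def conj_commute)
  finally show ?thesis .
qed

lemma perm_has0: "(\<sigma>::nat\<Rightarrow>nat) permutes {0..<5} \<Longrightarrow> \<exists>i<5. \<sigma> i = 0"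
proof -
  assume a: "\<sigma> permutes {0..<5}"
  have "(0::nat) \<in> \<sigma> ` {0..<5}" using permutes_image[OF a] by simp
  thus ?thesis by auto
qed

lemma card_Api: assumes "\<sigma> permutes {0..<5}" shows "card (Api \<sigma>) = 6^4"
proof -
  have "of_nat (card (Api \<sigma>)) = (\<Sum>x\<in>Api \<sigma>. cpair (replicate 5 6) (replicate 5 0) x)"
    by (simp add: cpair_def)
  also have "\<dots> = of_nat (6^4 * card {c\<in>{0..<6::int}. \<forall>i<5. (6::int) dvd (replicate 5 0 !i + c * W \<sigma> ! i)})"
    by (rule sum_Api)
  finally have e: "card (Api \<sigma>) = 6^4 * card {c\<in>{0..<6::int}. \<forall>i<5. (6::int) dvd (replicate 5 0 ! i + c * W \<sigma> ! i)}"
    by (simp only: of_nat_eq_iff)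
  obtain i0 where i0: "i0 < 5" "\<sigma> i0 = 0" using perm_has0[OF assms] by blast
  have "{c\<in>{0..<6::int}. \<forall>i<5. (6::int) dvd (replicate 5 0 ! i + c * W \<sigma> ! i)} = {0}"
  proof (rule set_eqI, rule iffI)
    fix c assume "c \<in> {c\<in>{0..<6::int}. \<forall>i<5. (6::int) dvd (replicate 5 0 ! i + c * W \<sigma> ! i)}"
    then have "0 \<le> c" "c < 6" "(6::int) dvd (c * W \<sigma> ! i0)" using i0 by auto
    moreover have "W \<sigma> ! i0 = 1" using i0 by (simp add: W_def)
    ultimately show "c \<in> {0}" by auto
  qed auto
  with e show ?thesis by simp
qed

abbreviation "G5 \<equiv> cgrp (replicate 5 (6::int))"
abbreviation "Y5 \<equiv> cgrp (replicate 5 (3::int))"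

definition red3 :: "int list \<Rightarrow> int list" where "red3 g = map (\<lambda>z. z mod 3) g"
definition P3 :: "int list \<Rightarrow> int list \<Rightarrow> int list" where
  "P3 y z = map (\<lambda>i. (y!i + z!i) mod 3) [0..<5]"
definition smul :: "int \<Rightarrow> int list \<Rightarrow> int list" where "smul t w = map (\<lambda>x. t * x) w"

definition HW :: "int list set \<Rightarrow> int list \<Rightarrow> bool" where
  "HW D w \<longleftrightarrow> (\<forall>\<gamma>\<in>D. \<forall>\<gamma>'\<in>D. \<gamma> \<noteq> \<gamma>' \<longrightarrow>
      (\<forall>c\<in>{0..<6}. \<not> (\<forall>i<5. (6::int) dvd (\<gamma>!i - \<gamma>'!i + c * w!i))))"

definition mm :: "int list set \<Rightarrow> int list \<Rightarrow> nat" where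
  "mm D y = card {\<gamma>\<in>D. red3 \<gamma> = y}"

lemma G5_mem: "g \<in> G5 \<longleftrightarrow> length g = 5 \<and> (\<forall>i<5. 0 \<le> g!i \<and> g!i < 6)"
  by (simp add: cgrp_def)
lemma Y5_mem: "g \<in> Y5 \<longleftrightarrow> length g = 5 \<and> (\<forall>i<5. 0 \<le> g!i \<and> g!i < 3)"
  by (simp add: cgrp_def)

lemma P3_Y: "P3 y z \<in> Y5" by (simp add: Y5_mem P3_def)

lemma red3_Y: "g \<in> G5 \<Longrightarrow> red3 g \<in> Y5" by (simp add: Y5_mem G5_mem red3_def)

lemma P3_cong: assumes "\<And>i. i<5 \<Longrightarrow> z!i mod 3 = z'!i mod 3" shows "P3 y z = P3 y z'"
  unfolding P3_def
proof (rule map_cong[OF refl])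
  fix i assume "i \<in> set [0..<5]" hence "i < 5" by simp
  thus "(y!i + z!i) mod 3 = (y!i + z'!i) mod 3" by (metis mod_add_right_eq assms)
qed

lemma P3_P3: "length a = 5 \<Longrightarrow> P3 (P3 y a) b = P3 y (map (\<lambda>i. a!i + b!i) [0..<5])"
  unfolding P3_def by (auto simp: mod_add_left_eq add.assoc)

lemma P3_id: assumes "y \<in> Y5" "\<And>i. i<5 \<Longrightarrow> z!i mod 3 = 0" shows "P3 y z = y"
proof (rule nth_equalityI)
  show "length (P3 y z) = length y" using assms(1) by (simp add: P3_def Y5_mem)
  fix i assume "i < length (P3 y z)" hence i: "i < 5" by (simp add: P3_def)
  have "(y!i + z!i) mod 3 = (y!i + z!i mod 3) mod 3" by (simp add: mod_add_right_eq)
  also have "\<dots> = y!i" using assms i by (simp add: Y5_mem)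
  finally show "P3 y z ! i = y ! i" using i by (simp add: P3_def)
qed

lemma card_mod3: assumes "0 \<le> r" "r < 3" shows "card {x\<in>{0..<6::int}. x mod 3 = r} = 2"
proof -
  have "{x\<in>{0..<6::int}. x mod 3 = r} = {r, r+3}" using assms by auto presburger+
  thus ?thesis by simp
qed

lemma card_fiber: assumes "u \<in> Y5" shows "card {g\<in>G5. red3 g = u} = 32"
proof -
  have "{g\<in>G5. red3 g = u} = PS 5 (\<lambda>i. {x\<in>{0..<6::int}. x mod 3 = u!i})"
    using assms unfolding G5_mem Y5_mem PS_def red3_def
    by (auto intro!: nth_equalityI)
  moreover have "card (PS 5 (\<lambda>i. {x\<in>{0..<6::int}. x mod 3 = u!i})) = 32"
  proof -
    have "card (PS 5 (\<lambda>i. {x\<in>{0..<6::int}. x mod 3 = u!i})) = (\<Prod>i<5. card {x\<in>{0..<6::int}. x mod 3 = u!i})"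
      by (rule card_PS) (rule finite_subset[of _ "{0..<6}"], auto)
    also have "\<dots> = (\<Prod>i<(5::nat). 2)"
      by (rule prod.cong[OF refl]) (use card_mod3 assms in \<open>auto simp: Y5_mem\<close>)
    finally show ?thesis by simp
  qed
  ultimately show ?thesis by simp
qed

definition phi :: "int list \<Rightarrow> int list \<Rightarrow> int \<Rightarrow> int list" where
  "phi w \<gamma> c = map (\<lambda>i. (\<gamma>!i + c * w!i) mod 6) [0..<5]"

lemma red3_phi: assumes "length \<gamma> = 5" "length w = 5"
  shows "red3 (phi w \<gamma> c) = P3 (red3 \<gamma>) (smul c w)"
proof (rule nth_equalityI)
  show "length (red3 (phi w \<gamma> c)) = length (P3 (red3 \<gamma>) (smul c w))"
    by (simp add: red3_def phi_def P3_def)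
  fix i assume "i < length (red3 (phi w \<gamma> c))" hence i: "i < 5" by (simp add: red3_def phi_def)
  have "((\<gamma>!i + c * w!i) mod 6) mod 3 = (\<gamma>!i + c * w!i) mod 3"
    by (simp add: mod_mod_cancel)
  also have "\<dots> = (\<gamma>!i mod 3 + c * w!i) mod 3" by (simp add: mod_add_left_eq)
  finally show "red3 (phi w \<gamma> c) ! i = P3 (red3 \<gamma>) (smul c w) ! i"
    using i assms by (simp add: red3_def phi_def P3_def smul_def)
qed

lemma P3_smul_smul: assumes "length w = 5"
  shows "P3 (P3 y (smul t w)) (smul c w) = P3 y (smul ((t + c) mod 3) w)"
proof -
  have "P3 (P3 y (smul t w)) (smul c w) = P3 y (map (\<lambda>i. smul t w ! i + smul c w ! i) [0..<5])"
    using assms by (simp add: P3_P3 smul_def)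
  also have "\<dots> = P3 y (smul ((t + c) mod 3) w)"
  proof (rule P3_cong)
    fix i :: nat assume "i < 5"
    hence "map (\<lambda>i. smul t w ! i + smul c w ! i) [0..<5] ! i = (t + c) * w!i"
      using assms by (simp add: smul_def algebra_simps)
    moreover have "smul ((t + c) mod 3) w ! i = ((t + c) mod 3) * w!i" using \<open>i<5\<close> assms by (simp add: smul_def)
    moreover have "((t + c) * w!i) mod 3 = (((t + c) mod 3) * w!i) mod 3" by (simp add: mod_mult_left_eq)
    ultimately show "map (\<lambda>i. smul t w ! i + smul c w ! i) [0..<5] ! i mod 3 = smul ((t + c) mod 3) w ! i mod 3"
      by simp
  qed
  finally show ?thesis .
qed

lemma line_bound:
  assumes D: "D \<subseteq> G5" and lw: "length w = 5" and i0: "i0 < 5" "w!i0 = 1"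
    and hw: "HW D w" and y: "y \<in> Y5"
  shows "mm D (P3 y (smul 0 w)) + mm D (P3 y (smul 1 w)) + mm D (P3 y (smul 2 w)) \<le> 16"
proof -
  define u where "u t = P3 y (smul t w)" for t
  have ui0: "u t ! i0 = (y!i0 + t) mod 3" for t using i0 lw by (simp add: u_def P3_def smul_def)
  have y0: "0 \<le> y!i0" "y!i0 < 3" using y i0 by (auto simp: Y5_mem)
  have d01: "u 0 \<noteq> u 1" using ui0[of 0] ui0[of 1] y0 by (auto) presburger
  have d02: "u 0 \<noteq> u 2" using ui0[of 0] ui0[of 2] y0 by (auto) presburger
  have d12: "u 1 \<noteq> u 2" using ui0[of 1] ui0[of 2] y0 by (auto) presburger
  define E where "E t = {\<gamma>\<in>D. red3 \<gamma> = u t}" for t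
  have finD: "finite D" using D finite_subset finite_cgrp by blast
  have fE: "finite (E t)" for t using finD by (simp add: E_def)
  define EE where "EE = E 0 \<union> E 1 \<union> E 2"
  have cEE: "card EE = mm D (u 0) + mm D (u 1) + mm D (u 2)"
  proof -
    have "card EE = card (E 0 \<union> E 1) + card (E 2)"
      unfolding EE_def by (rule card_Un_disjoint) (use fE d02 d12 in \<open>auto simp: E_def\<close>)
    also have "card (E 0 \<union> E 1) = card (E 0) + card (E 1)"
      by (rule card_Un_disjoint) (use fE d01 in \<open>auto simp: E_def\<close>)
    finally show ?thesis by (simp add: E_def mm_def)
  qed
  define T where "T = {g\<in>G5. red3 g = u 0} \<union> {g\<in>G5. red3 g = u 1} \<union> {g\<in>G5. red3 g = u 2}"
  have cT: "card T \<le> 96"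
  proof -
    have "card T \<le> card ({g\<in>G5. red3 g = u 0} \<union> {g\<in>G5. red3 g = u 1}) + card {g\<in>G5. red3 g = u 2}"
      unfolding T_def by (rule card_Un_le)
    also have "\<dots> \<le> card {g\<in>G5. red3 g = u 0} + card {g\<in>G5. red3 g = u 1} + card {g\<in>G5. red3 g = u 2}"
      using card_Un_le by simp
    also have "\<dots> = 96" by (simp add: card_fiber u_def P3_Y)
    finally show ?thesis .
  qed
  have fT: "finite T" unfolding T_def using finite_cgrp by auto
  have maps: "(\<lambda>(\<gamma>,c). phi w \<gamma> c) ` (EE \<times> {0..<6}) \<subseteq> T"
  proof clarify
    fix \<gamma> c assume g: "\<gamma> \<in> EE" and c: "c \<in> {0..<6::int}"
    then have gD: "\<gamma> \<in> D" by (auto simp: EE_def E_def)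
    then have lg: "length \<gamma> = 5" using D by (auto simp: G5_mem)
    have inG: "phi w \<gamma> c \<in> G5" by (simp add: G5_mem phi_def)
    obtain t where t: "t \<in> {0,1,2}" "red3 \<gamma> = u t" using g by (auto simp: EE_def E_def)
    have "red3 (phi w \<gamma> c) = u ((t + c) mod 3)"
      unfolding red3_phi[OF lg lw] t(2) u_def by (rule P3_smul_smul[OF lw])
    moreover have "(t + c) mod 3 \<in> {0,1,2}" by auto
    ultimately show "phi w \<gamma> c \<in> T" using inG unfolding T_def by auto
  qed
  have inj: "inj_on (\<lambda>(\<gamma>,c). phi w \<gamma> c) (EE \<times> {0..<6})"
  proof (rule inj_onI, clarify)
    fix \<gamma> c \<gamma>' c' assume g: "\<gamma> \<in> EE" "c \<in> {0..<6::int}" "\<gamma>' \<in> EE" "c' \<in> {0..<6::int}"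
      and eq: "phi w \<gamma> c = phi w \<gamma>' c'"
    have gD: "\<gamma> \<in> D" "\<gamma>' \<in> D" using g by (auto simp: EE_def E_def)
    define c'' where "c'' = (c - c') mod 6"
    have c''r: "c'' \<in> {0..<6}" by (simp add: c''_def)
    have dv: "6 dvd (\<gamma>!i - \<gamma>'!i + c'' * w!i)" if i: "i < 5" for i
    proof -
      have "(\<gamma>!i + c * w!i) mod 6 = (\<gamma>'!i + c' * w!i) mod 6"
        using arg_cong[OF eq, of "\<lambda>l. l!i"] i by (simp add: phi_def)
      hence d1: "6 dvd (\<gamma>!i + c * w!i) - (\<gamma>'!i + c' * w!i)" by (simp add: mod_eq_dvd_iff)
      have d2: "6 dvd ((c - c') - c'') * w!i" unfolding c''_def
        by (simp add: minus_mod_eq_mult_div[symmetric])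
      have "\<gamma>!i - \<gamma>'!i + c'' * w!i = ((\<gamma>!i + c * w!i) - (\<gamma>'!i + c' * w!i)) - ((c - c') - c'') * w!i"
        by (simp add: algebra_simps)
      thus ?thesis using d1 d2 by (metis dvd_diff)
    qed
    have "\<gamma> = \<gamma>'"
    proof (rule ccontr)
      assume "\<gamma> \<noteq> \<gamma>'"
      with hw gD c''r dv show False unfolding HW_def by blast
    qed
    moreover have "c = c'"
    proof -
      have "6 dvd c''" using dv[OF i0(1)] i0(2) \<open>\<gamma> = \<gamma>'\<close> by simp
      hence "c'' = 0" using c''r by auto
      thus ?thesis using g(2,4) unfolding c''_def by auto presburger
    qed
    ultimately show "\<gamma> = \<gamma>' \<and> c = c'" by simp
  qed
  have "card (EE \<times> {0..<6::int}) \<le> card T"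
    using card_inj_on_le[OF inj maps fT] by simp
  hence "card EE * 6 \<le> 96" using cT by (simp add: card_cartesian_product)
  hence "card EE \<le> 16" by simp
  thus ?thesis using cEE by (simp add: u_def)
qed

definition LL :: "int list set \<Rightarrow> int list \<Rightarrow> int list \<Rightarrow> nat" where
  "LL D w y = mm D (P3 y (smul 0 w)) + mm D (P3 y (smul 1 w)) + mm D (P3 y (smul 2 w))"

lemma sum_mm: assumes "D \<subseteq> G5" shows "(\<Sum>y\<in>Y5. mm D y) = card D"
proof -
  have "D = (\<Union>y\<in>Y5. {\<gamma>\<in>D. red3 \<gamma> = y})" using assms red3_Y by blast
  moreover have "finite D" using assms finite_subset finite_cgrp by blast
  moreover have "card (\<Union>y\<in>Y5. {\<gamma>\<in>D. red3 \<gamma> = y}) = (\<Sum>y\<in>Y5. card {\<gamma>\<in>D. red3 \<gamma> = y})"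
    by (rule card_UN_disjoint) (use \<open>finite D\<close> finite_cgrp in auto)
  ultimately have "card D = (\<Sum>y\<in>Y5. card {\<gamma>\<in>D. red3 \<gamma> = y})" by simp
  thus ?thesis by (simp add: mm_def)
qed

lemma sum_shift: assumes "length z = 5" shows "(\<Sum>y\<in>Y5. mm D (P3 y z)) = (\<Sum>y\<in>Y5. mm D y)"
proof (rule sum.reindex_bij_witness[where j = "\<lambda>y. P3 y z" and i = "\<lambda>y. P3 y (map uminus z)"])
  fix a assume a: "a \<in> Y5"
  show "P3 (P3 a z) (map uminus z) = a"
    using assms a by (simp add: P3_P3 P3_id)
  show "P3 a z \<in> Y5" by (rule P3_Y)
  show "P3 (P3 a (map uminus z)) z = a"
    using assms a by (simp add: P3_P3 P3_id)
  show "P3 a (map uminus z) \<in> Y5" by (rule P3_Y)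
  show "mm D (P3 a z) = mm D (P3 a z)" ..
qed

lemma card_Y5: "card Y5 = 243"
  by (simp add: cgrp_rep card_PS)

lemma all16:
  assumes D: "D \<subseteq> G5" and cD: "card D \<ge> 1296" and lw: "length w = 5"
    and le: "\<forall>y\<in>Y5. LL D w y \<le> 16"
  shows "\<forall>y\<in>Y5. LL D w y = 16"
proof (rule ccontr)
  assume "\<not> (\<forall>y\<in>Y5. LL D w y = 16)"
  then obtain y0 where y0: "y0 \<in> Y5" "LL D w y0 < 16" using le by force
  have "(\<Sum>y\<in>Y5. LL D w y) < (\<Sum>y\<in>Y5. 16)"
    by (rule sum_strict_mono_ex1) (use le y0 finite_cgrp in auto)
  moreover have "(\<Sum>y\<in>Y5. LL D w y) = 3 * card D"
  proof -
    have l: "length (smul t w) = 5" for t using lw by (simp add: smul_def)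
    show ?thesis
      unfolding LL_def sum.distrib sum_shift[OF l] sum_mm[OF D] by simp
  qed
  ultimately show False using cD card_Y5 by simp
qed

lemma less5: "(i::nat) < 5 \<Longrightarrow> i = 0 \<or> i = 1 \<or> i = 2 \<or> i = 3 \<or> i = 4" by arith

lemma P3_comb:
  assumes "length a = 5" "length b = 5" "length c = 5"
    and "\<And>i. i < 5 \<Longrightarrow> (s * a!i + t * b!i) mod 3 = (u * c!i) mod 3"
  shows "P3 (P3 y (smul s a)) (smul t b) = P3 y (smul u c)"
  using assms by (auto simp: P3_P3 smul_def intro!: P3_cong)

lemma P3_smul0: "y \<in> Y5 \<Longrightarrow> length w = 5 \<Longrightarrow> P3 y (smul 0 w) = y"
  by (rule P3_id) (auto simp: smul_def)

lemma P3_smul1: "P3 y (smul 1 w) = P3 y w"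
  by (simp add: smul_def)

lemma plane:
  assumes lens: "length f = 5" "length g = 5" "length h = 5" "length k = 5" "length k2 = 5"
    and Lf: "\<forall>y\<in>Y5. LL D f y = 16" and Lg: "\<forall>y\<in>Y5. LL D g y = 16" and Lh: "\<forall>y\<in>Y5. LL D h y = 16"
    and C1: "\<And>i. i < 5 \<Longrightarrow> (f!i + g!i) mod 3 = h!i mod 3"
    and C2: "\<And>i. i < 5 \<Longrightarrow> (g!i + 2 * f!i) mod 3 = k2!i mod 3"
    and C3: "\<And>i. i < 5 \<Longrightarrow> (2 * g!i + f!i) mod 3 = k!i mod 3"
    and y: "y \<in> Y5"
  shows "2 * mm D y = mm D (P3 y k) + mm D (P3 y k2)"
proof -
  define y1 where "y1 = P3 y (smul 1 g)"
  define y2 where "y2 = P3 y (smul 2 g)"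
  have y12: "y1 \<in> Y5" "y2 \<in> Y5" by (simp_all add: y1_def y2_def P3_Y)
  have e1: "P3 y1 (smul 1 f) = P3 y (smul 1 h)"
    unfolding y1_def by (rule P3_comb) (use lens C1 in \<open>auto simp: add.commute\<close>)
  have e2: "P3 y1 (smul 2 f) = P3 y (smul 1 k2)"
    unfolding y1_def by (rule P3_comb) (use lens C2 in auto)
  have e3: "P3 y2 (smul 1 f) = P3 y (smul 1 k)"
    unfolding y2_def by (rule P3_comb) (use lens C3 in auto)
  have e4: "P3 y2 (smul 2 f) = P3 y (smul 2 h)"
  proof -
    have "(2 * g!i + 2 * f!i) mod 3 = (2 * h!i) mod 3" if "i < 5" for i
    proof -
      have "(2 * g!i + 2 * f!i) mod 3 = (2 * ((f!i + g!i) mod 3)) mod 3"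
        by (simp add: mod_mult_right_eq algebra_simps)
      also have "\<dots> = (2 * h!i) mod 3" using C1[OF that] by (simp add: mod_mult_right_eq)
      finally show ?thesis .
    qed
    thus ?thesis unfolding y2_def by (intro P3_comb) (use lens in auto)
  qed
  have "LL D f y1 + LL D f y2 + LL D f y = LL D f y + LL D g y + LL D h y"
    using Lf Lg Lh y y12 by simp
  thus ?thesis
    unfolding LL_def P3_smul0[OF y lens(1)] P3_smul0[OF y lens(2)] P3_smul0[OF y lens(3)]
      P3_smul0[OF y12(1) lens(1)] P3_smul0[OF y12(2) lens(1)] e1 e2 e3 e4
    unfolding y1_def y2_def P3_smul1 by simp
qed

lemma invariance:
  assumes lens: "length k = 5" "length k2 = 5"
    and H: "\<forall>y\<in>Y5. 2 * mm D y = mm D (P3 y k) + mm D (P3 y k2)"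
    and C: "\<And>i. i < 5 \<Longrightarrow> (2 * k!i) mod 3 = k2!i mod 3"
    and y: "y \<in> Y5"
  shows "mm D (P3 y k) = mm D y"
proof -
  have a: "P3 (P3 y k) k = P3 y k2"
    using P3_comb[of k k k2 1 1 1 y] lens C by (simp add: P3_smul1)
  have b: "P3 (P3 y k) k2 = y"
  proof -
    have "P3 (P3 y k) k2 = P3 y (map (\<lambda>i. k!i + k2!i) [0..<5])" using lens by (simp add: P3_P3)
    also have "\<dots> = y"
    proof (rule P3_id[OF y])
      fix i :: nat assume i: "i < 5"
      have "(k!i + k2!i) mod 3 = (k!i + (2 * k!i) mod 3) mod 3" using C[OF i] by (simp add: mod_add_right_eq)
      also have "\<dots> = (3 * k!i) mod 3" by (simp add: mod_add_right_eq)
      finally show "map (\<lambda>i. k!i + k2!i) [0..<5] ! i mod 3 = 0" using i by simp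
    qed
    finally show ?thesis .
  qed
  have "2 * mm D (P3 y k) = mm D (P3 y k2) + mm D y"
    using H P3_Y[of y k] a b by metis
  moreover have "2 * mm D y = mm D (P3 y k) + mm D (P3 y k2)" using H y by blast
  ultimately show ?thesis by simp
qed

lemma P3_P3_cong: "length a = 5 \<Longrightarrow> (\<And>i. i<5 \<Longrightarrow> (a!i + b!i) mod 3 = c!i mod 3) \<Longrightarrow> P3 (P3 y a) b = P3 y c"
  by (auto simp: P3_P3 intro!: P3_cong)

lemma L16:
  assumes D: "D \<subseteq> G5" and cD: "card D \<ge> 1296" and lw: "length w = 5" and i0: "i0 < 5" "w!i0 = 1"
    and hw: "HW D w"
  shows "\<forall>y\<in>Y5. LL D w y = 16"
  by (rule all16[OF D cD lw]) (use line_bound[OF D lw i0 hw] in \<open>simp add: LL_def\<close>)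

theorem comb_main:
  assumes D: "D \<subseteq> G5"
    and h1: "HW D [3,1,4,2,5]" and h2: "HW D [1,4,2,3,5]" and h3: "HW D [1,2,3,5,4]"
    and h4: "HW D [1,4,2,5,3]" and h5: "HW D [1,2,3,4,5]" and h6: "HW D [1,3,4,2,5]"
  shows "card D \<le> 1295"
proof (rule ccontr)
  assume "\<not> card D \<le> 1295"
  hence cD: "card D \<ge> 1296" by simp
  have Lf: "\<forall>y\<in>Y5. LL D [3,1,4,2,5] y = 16" by (rule L16[OF D cD _ _ _ h1, of 1]) auto
  have Lg1: "\<forall>y\<in>Y5. LL D [1,4,2,3,5] y = 16" by (rule L16[OF D cD _ _ _ h2, of 0]) auto
  have Lh1: "\<forall>y\<in>Y5. LL D [1,2,3,5,4] y = 16" by (rule L16[OF D cD _ _ _ h3, of 0]) auto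
  have Lg2: "\<forall>y\<in>Y5. LL D [1,4,2,5,3] y = 16" by (rule L16[OF D cD _ _ _ h4, of 0]) auto
  have Lh2: "\<forall>y\<in>Y5. LL D [1,2,3,4,5] y = 16" by (rule L16[OF D cD _ _ _ h5, of 0]) auto
  have Lf0: "\<forall>y\<in>Y5. LL D [1,3,4,2,5] y = 16" by (rule L16[OF D cD _ _ _ h6, of 0]) auto
  have pl1: "\<forall>y\<in>Y5. 2 * mm D y = mm D (P3 y [2,0,2,2,0]) + mm D (P3 y [1,0,1,1,0])"
    by (intro ballI plane[OF _ _ _ _ _ Lf Lg1 Lh1]) (auto dest!: less5)
  have pl2: "\<forall>y\<in>Y5. 2 * mm D y = mm D (P3 y [2,0,2,0,2]) + mm D (P3 y [1,0,1,0,1])"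
    by (intro ballI plane[OF _ _ _ _ _ Lf Lg2 Lh2]) (auto dest!: less5)
  have inv1: "\<forall>y\<in>Y5. mm D (P3 y [2,0,2,2,0]) = mm D y"
    by (intro ballI invariance[OF _ _ pl1]) (auto dest!: less5)
  have inv2: "\<forall>y\<in>Y5. mm D (P3 y [2,0,2,0,2]) = mm D y"
    by (intro ballI invariance[OF _ _ pl2]) (auto dest!: less5)
  define y0 :: "int list" where "y0 = [0,0,0,0,0]"
  have y0Y: "y0 \<in> Y5" by (auto simp: y0_def Y5_mem dest!: less5)
  define a where "a = P3 y0 [1,3,4,2,5]"
  define b where "b = P3 y0 (smul 2 [1,3,4,2,5])"
  have ea: "P3 (P3 y0 [2,0,2,2,0]) [2,0,2,0,2] = a"
    unfolding a_def by (rule P3_P3_cong) (auto dest!: less5)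
  have eb: "P3 (P3 a [2,0,2,2,0]) [2,0,2,0,2] = b"
    unfolding a_def b_def
    by (subst P3_P3_cong[where c = "[3,3,6,4,5]"], simp, fastforce dest!: less5,
        rule P3_P3_cong) (auto dest!: less5 simp: smul_def)
  have "mm D a = mm D y0"
    using inv1 inv2 y0Y P3_Y ea by metis
  moreover have "mm D b = mm D a"
    using inv1 inv2 P3_Y eb unfolding a_def by metis
  moreover have "LL D [1,3,4,2,5] y0 = mm D y0 + mm D a + mm D b"
    unfolding LL_def a_def b_def P3_smul1 using P3_smul0[OF y0Y, of "[1,3,4,2,5]"] by simp
  ultimately have "3 * mm D y0 = 16" using Lf0 y0Y by simp
  thus False by presburger
qed

lemma cpair_cnj: "cpair ms c x * cnj (cpair ms c x) = 1"
  by (simp add: cpair_def cis_cnj cis_mult)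

lemma norm_cpair: "cmod (cpair ms c x) = 1"
  by (simp add: cpair_def)

lemma orth_bound:
  assumes B: "finite B" "b0 \<in> B" and Bl: "\<forall>b\<in>B. length b \<ge> length ms"
    and ms: "\<forall>i<length ms. ms!i \<noteq> 0"
    and R: "finite R" "\<forall>\<rho>\<in>R. length \<rho> \<ge> length ms"
    and orth: "\<forall>\<rho>\<in>R. \<forall>\<rho>'\<in>R. \<rho> \<noteq> \<rho>' \<longrightarrow> ft_ind ms B (csub ms \<rho> \<rho>') = 0"
  shows "card R \<le> card B"
proof -
  let ?\<chi> = "\<lambda>\<rho> b. cpair ms \<rho> b"
  define y where "y b = (\<Sum>\<rho>\<in>R. cnj (?\<chi> \<rho> b0) * ?\<chi> \<rho> b)" for b
  have ip: "(\<Sum>b\<in>B. ?\<chi> \<rho> b * cnj (?\<chi> \<rho>' b)) = (if \<rho> = \<rho>' then of_nat (card B) else 0)"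
    if "\<rho> \<in> R" "\<rho>' \<in> R" for \<rho> \<rho>'
  proof (cases "\<rho> = \<rho>'")
    case True thus ?thesis by (simp add: cpair_cnj)
  next
    case False
    have "(\<Sum>b\<in>B. ?\<chi> \<rho> b * cnj (?\<chi> \<rho>' b)) = ft_ind ms B (csub ms \<rho> \<rho>')"
      unfolding ft_ind_def by (rule sum.cong[OF refl], rule cpair_csub[symmetric]) (use that R(2) ms in auto)
    thus ?thesis using orth that False by simp
  qed
  have "(\<Sum>b\<in>B. y b * cnj (y b)) = (\<Sum>b\<in>B. \<Sum>\<rho>\<in>R. \<Sum>\<rho>'\<in>R. cnj (?\<chi> \<rho>' b0) * ?\<chi> \<rho> b0 * (?\<chi> \<rho>' b * cnj (?\<chi> \<rho> b)))"
    unfolding y_def by (simp add: sum_distrib_left sum_distrib_right algebra_simps)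
  also have "\<dots> = (\<Sum>\<rho>\<in>R. \<Sum>\<rho>'\<in>R. cnj (?\<chi> \<rho>' b0) * ?\<chi> \<rho> b0 * (\<Sum>b\<in>B. ?\<chi> \<rho>' b * cnj (?\<chi> \<rho> b)))"
    by (simp add: sum_distrib_left sum.swap[of _ B])
  also have "\<dots> = (\<Sum>\<rho>\<in>R. of_nat (card B))"
  proof (rule sum.cong[OF refl])
    fix \<rho> assume r: "\<rho> \<in> R"
    have "(\<Sum>\<rho>'\<in>R. cnj (?\<chi> \<rho>' b0) * ?\<chi> \<rho> b0 * (\<Sum>b\<in>B. ?\<chi> \<rho>' b * cnj (?\<chi> \<rho> b)))
        = (\<Sum>\<rho>'\<in>R. if \<rho>' = \<rho> then cnj (?\<chi> \<rho> b0) * ?\<chi> \<rho> b0 * of_nat (card B) else 0)"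
      by (rule sum.cong[OF refl]) (use ip r in auto)
    also have "\<dots> = of_nat (card B)" using r R(1) cpair_cnj[of ms \<rho> b0]
      by (simp add: mult.commute)
    finally show "(\<Sum>\<rho>'\<in>R. cnj (?\<chi> \<rho>' b0) * ?\<chi> \<rho> b0 * (\<Sum>b\<in>B. ?\<chi> \<rho>' b * cnj (?\<chi> \<rho> b))) = of_nat (card B)" .
  qed
  finally have s: "(\<Sum>b\<in>B. y b * cnj (y b)) = of_nat (card R * card B)" by simp
  have "(\<Sum>b\<in>B. y b * cnj (y b)) = of_real (\<Sum>b\<in>B. (cmod (y b))^2)"
    by (simp only: of_real_sum complex_norm_square)
  with s have s2: "(\<Sum>b\<in>B. (cmod (y b))^2) = real (card R * card B)"
    by (metis of_real_eq_iff of_real_of_nat_eq)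
  have "y b0 = of_nat (card R)"
    unfolding y_def using cpair_cnj by (simp add: mult.commute)
  hence "(cmod (y b0))^2 = real (card R)^2" by simp
  moreover have "(cmod (y b0))^2 \<le> (\<Sum>b\<in>B. (cmod (y b))^2)"
    by (rule member_le_sum) (use B in auto)
  ultimately have "real (card R)^2 \<le> real (card R) * real (card B)" using s2 by simp
  hence "real (card R) \<le> real (card B)"
    by (cases "card R = 0") (auto simp: power2_eq_square)
  thus ?thesis by simp
qed

lemma sum_lessThan_split: "(\<Sum>i<a+(b::nat). f i) = (\<Sum>i<a. f i) + (\<Sum>i<b. f (a+i))"
  by (induction b) (simp_all add: add.assoc)

lemma cpair_append:
  assumes "length c1 = length ms1" "length x1 = length ms1"
  shows "cpair (ms1@ms2) (c1@c2) (x1@x2) = cpair ms1 c1 x1 * cpair ms2 c2 x2"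
  unfolding cpair_def using assms
  by (simp add: sum_lessThan_split nth_append distrib_left cis_mult)

lemma cpair_zero: "(\<And>i. i < length ms \<Longrightarrow> c!i = 0) \<Longrightarrow> cpair ms c x = 1"
  unfolding cpair_def by simp

lemma cpair_cadd:
  assumes "length x \<ge> length ms" "length y \<ge> length ms" "\<forall>i<length ms. ms!i \<noteq> 0"
  shows "cpair ms c (cadd ms x y) = cpair ms c x * cpair ms c y"
proof -
  have "\<forall>i<length ms. \<exists>t::int. (x!i + y!i) mod ms!i = x!i + y!i + ms!i * t"
  proof (intro allI impI)
    fix i assume "i < length ms"
    show "\<exists>t::int. (x!i + y!i) mod ms!i = x!i + y!i + ms!i * t"
      by (rule exI[of _ "- ((x!i + y!i) div ms!i)"]) (simp add: minus_mult_div_eq_mod[symmetric])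
  qed
  then obtain t where t: "\<And>i. i<length ms \<Longrightarrow> (x!i + y!i) mod ms!i = x!i + y!i + ms!i * t i"
    by metis
  have eq: "(\<Sum>i<length ms. of_int (c!i * (cadd ms x y)!i) / of_int (ms!i) :: real)
      = (\<Sum>i<length ms. of_int (c!i * x!i) / of_int (ms!i)) + (\<Sum>i<length ms. of_int (c!i * y!i) / of_int (ms!i))
        + of_int (\<Sum>i<length ms. c!i * t i)"
    unfolding of_int_sum sum.distrib[symmetric]
  proof (rule sum.cong[OF refl])
    fix i assume "i \<in> {..<length ms}"
    hence i: "i < length ms" by simp
    have h: "(cadd ms x y)!i = x!i + y!i + ms!i * t i" using t[OF i] i by (simp add: cadd_def)
    have "ms!i \<noteq> 0" using assms(3) i by simp
    thus "of_int (c!i * (cadd ms x y)!i) / of_int (ms!i) = of_int (c!i * x!i) / of_int (ms!i) +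
         of_int (c!i * y!i) / of_int (ms!i) + (of_int (c!i * t i) :: real)"
      unfolding h by (simp add: field_simps)
  qed
  show ?thesis unfolding cpair_def eq
    by (simp only: distrib_left cis_mult[symmetric] cis_2pi_int mult_1_right)
qed

definition sk :: "(nat \<Rightarrow> nat \<Rightarrow> nat) \<Rightarrow> int \<Rightarrow> (nat \<Rightarrow> nat)" where
  "sk enum k = enum (if k < 120 then nat k else 0)"

lemma setA_UN: "setA enum q = (\<Union>k\<in>{0..<q}. (\<lambda>x. x @ [k]) ` Api (sk enum k))"
proof (rule set_eqI, rule iffI)
  fix a assume "a \<in> setA enum q"
  then obtain x k where "a = x @ [k]" "0 \<le> k" "k < q" "x \<in> Api (sk enum k)"
    unfolding setA_def sk_def by auto
  thus "a \<in> (\<Union>k\<in>{0..<q}. (\<lambda>x. x @ [k]) ` Api (sk enum k))" by auto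
next
  fix a assume "a \<in> (\<Union>k\<in>{0..<q}. (\<lambda>x. x @ [k]) ` Api (sk enum k))"
  then obtain x k where "a = x @ [k]" "0 \<le> k" "k < q" "x \<in> Api (sk enum k)" by auto
  thus "a \<in> setA enum q" unfolding setA_def sk_def by blast
qed

lemma sum_setA:
  "(\<Sum>a\<in>setA enum q. f a) = (\<Sum>k\<in>{0..<q}. \<Sum>x\<in>Api (sk enum k). f (x @ [k]))"
proof -
  have fin: "finite (Api \<sigma>)" for \<sigma> unfolding Api_def using finite_cgrp by simp
  have "(\<Sum>a\<in>setA enum q. f a) = (\<Sum>k\<in>{0..<q}. \<Sum>a\<in>(\<lambda>x. x @ [k]) ` Api (sk enum k). f a)"
    unfolding setA_UN by (rule sum.UNION_disjoint) (auto simp: fin)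
  also have "\<dots> = (\<Sum>k\<in>{0..<q}. \<Sum>x\<in>Api (sk enum k). f (x @ [k]))"
    by (rule sum.cong[OF refl], subst sum.reindex) (auto simp: inj_on_def)
  finally show ?thesis .
qed

lemma card_setA:
  assumes "\<And>k. sk enum k permutes {0..<5}"
  shows "card (setA enum q) = nat q * 6^4"
proof -
  have "card (setA enum q) = (\<Sum>a\<in>setA enum q. (1::nat))" by simp
  also have "\<dots> = (\<Sum>k\<in>{0..<q}. card (Api (sk enum k)))" unfolding sum_setA by simp
  also have "\<dots> = (\<Sum>k\<in>{0..<q}. 6^4)" using card_Api assms by simp
  finally show ?thesis by simp
qed

lemma setA_len: "a \<in> setA enum q \<Longrightarrow> length a = 6"
  unfolding setA_def Api_def cgrp_def by auto

lemma Pt_image: "Pt p A t B = (\<lambda>(a,b). a @ cadd (msH p) (t a) b) ` (A \<times> B)"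
  unfolding Pt_def by auto

lemma msH_len [simp]: "length (msH p) = 4" by (simp add: msH_def)
lemma msG_len [simp]: "length (msG q) = 6" by (simp add: msG_def)
lemma msGH_len [simp]: "length (msGH q p) = 10" by (simp add: msGH_def)

lemma cadd_inj:
  assumes "b \<in> cgrp (msH p)" "b' \<in> cgrp (msH p)" "cadd (msH p) u b = cadd (msH p) u b'"
  shows "b = b'"
proof (rule nth_equalityI)
  show "length b = length b'" using assms by (simp add: cgrp_def)
  fix i assume "i < length b"
  hence i: "i < 4" using assms by (simp add: cgrp_def)
  have "(u!i + b!i) mod p = (u!i + b'!i) mod p"
    using arg_cong[OF assms(3), of "\<lambda>l. l!i"] i by (simp add: cadd_def msH_def)
  hence "b!i mod p = b'!i mod p" by (simp add: mod_eq_dvd_iff)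
  moreover have "0 \<le> b!i" "b!i < p" "0 \<le> b'!i" "b'!i < p" using assms i by (auto simp: cgrp_def msH_def)
  ultimately show "b!i = b'!i" by simp
qed

lemma ft_Pt:
  assumes p: "p > 0" and A: "\<forall>a\<in>A. length a = 6" and B: "B \<subseteq> cgrp (msH p)"
    and t: "\<forall>a\<in>A. length (t a) = 4" and dG: "length dG = 6"
  shows "ft_ind (msGH q p) (Pt p A t B) (dG @ dH)
     = (\<Sum>a\<in>A. cpair (msG q) dG a * cpair (msH p) dH (t a)) * ft_ind (msH p) B dH"
proof -
  have inj: "inj_on (\<lambda>(a,b). a @ cadd (msH p) (t a) b) (A \<times> B)"
  proof (rule inj_onI, clarify)
    fix a b a' b' assume h: "a \<in> A" "b \<in> B" "a' \<in> A" "b' \<in> B"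
      and eq: "a @ cadd (msH p) (t a) b = a' @ cadd (msH p) (t a') b'"
    have "a = a'" using eq A h by (metis append_eq_append_conv)
    moreover from this have "b = b'" using eq B h by (intro cadd_inj[of b p b' "t a"]) auto
    ultimately show "a = a' \<and> b = b'" by simp
  qed
  have mp: "\<forall>i<length (msH p). msH p ! i \<noteq> 0" using p by (simp add: msH_def)
  have "ft_ind (msGH q p) (Pt p A t B) (dG @ dH)
      = (\<Sum>(a,b)\<in>A \<times> B. cpair (msGH q p) (dG @ dH) (a @ cadd (msH p) (t a) b))"
    unfolding ft_ind_def Pt_image by (subst sum.reindex[OF inj]) (simp add: case_prod_unfold)
  also have "\<dots> = (\<Sum>(a,b)\<in>A \<times> B. (cpair (msG q) dG a * cpair (msH p) dH (t a)) * cpair (msH p) dH b)"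
  proof (rule sum.cong[OF refl], clarify)
    fix a b assume h: "a \<in> A" "b \<in> B"
    have "cpair (msGH q p) (dG @ dH) (a @ cadd (msH p) (t a) b) = cpair (msG q) dG a * cpair (msH p) dH (cadd (msH p) (t a) b)"
      unfolding msGH_def by (rule cpair_append) (use dG A h in auto)
    also have "\<dots> = cpair (msG q) dG a * (cpair (msH p) dH (t a) * cpair (msH p) dH b)"
      using cpair_cadd[OF _ _ mp] t h B by (auto simp: cgrp_def)
    finally show "cpair (msGH q p) (dG @ dH) (a @ cadd (msH p) (t a) b) = cpair (msG q) dG a * cpair (msH p) dH (t a) * cpair (msH p) dH b"
      by (simp add: mult.assoc)
  qed
  also have "\<dots> = (\<Sum>a\<in>A. cpair (msG q) dG a * cpair (msH p) dH (t a)) * ft_ind (msH p) B dH"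
    unfolding ft_ind_def by (simp add: sum_product sum.cartesian_product)
  finally show ?thesis .
qed

definition Fs :: "(nat \<Rightarrow> nat \<Rightarrow> nat) \<Rightarrow> int \<Rightarrow> (nat \<Rightarrow> int list) \<Rightarrow> int \<Rightarrow> int list \<Rightarrow> int list \<Rightarrow> complex" where
  "Fs enum q v p dg dH = (\<Sum>a\<in>setA enum q. cpair (msG q) (dg @ [0]) a * cpair (msH p) dH (tmap v a))"

definition Nk :: "(nat \<Rightarrow> nat \<Rightarrow> nat) \<Rightarrow> int list \<Rightarrow> int \<Rightarrow> nat" where
  "Nk enum dg k = card {c\<in>{0..<6::int}. \<forall>i<5. (6::int) dvd (dg!i + c * W (sk enum k) ! i)}"

lemma Api_G5: "x \<in> Api \<sigma> \<Longrightarrow> x \<in> G5" by (simp add: Api_def)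

lemma zero_Api: "replicate 5 0 \<in> Api \<sigma>"
  by (auto simp: Api_def cgrp_def)

lemma cpair_x0: "(\<And>i. i < length ms \<Longrightarrow> x!i = 0) \<Longrightarrow> cpair ms c x = 1"
  unfolding cpair_def by simp

lemma tmap_app: "length x = 5 \<Longrightarrow>
  tmap v (x @ [k]) = (if x = replicate 5 0 \<and> 1 \<le> k \<and> k \<le> 4 then v (nat k) else replicate 4 0)"
  by (simp add: tmap_def nth_append)

lemma Fs_formula:
  assumes dg: "length dg = 5" and q: "q > 4"
  shows "Fs enum q v p dg dH = of_nat (\<Sum>k\<in>{0..<q}. 6^4 * Nk enum dg k)
           + (\<Sum>k\<in>{1..4::int}. (cpair (msH p) dH (v (nat k)) - 1))"
proof -
  let ?z = "replicate 5 (0::int)"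
  let ?f = "\<lambda>x. cpair (replicate 5 6) dg x"
  have inner: "(\<Sum>x\<in>Api (sk enum k). cpair (msG q) (dg @ [0]) (x @ [k]) * cpair (msH p) dH (tmap v (x @ [k])))
     = of_nat (6^4 * Nk enum dg k) + (if 1 \<le> k \<and> k \<le> 4 then cpair (msH p) dH (v (nat k)) - 1 else 0)" for k
  proof -
    have e1: "cpair (msG q) (dg @ [0]) (x @ [k]) = ?f x" if "x \<in> Api (sk enum k)" for x
    proof -
      have "length x = 5" using Api_G5[OF that] by (simp add: G5_mem)
      hence "cpair (msG q) (dg @ [0]) (x @ [k]) = ?f x * cpair [q] [0] [k]"
        unfolding msG_def using dg by (intro cpair_append) auto
      thus ?thesis by (simp add: cpair_def)
    qed
    have e2: "cpair (msH p) dH (tmap v (x @ [k])) = (if x = ?z \<and> 1 \<le> k \<and> k \<le> 4 then cpair (msH p) dH (v (nat k)) else 1)"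
      if "x \<in> Api (sk enum k)" for x
    proof -
      have "length x = 5" using Api_G5[OF that] by (simp add: G5_mem)
      thus ?thesis by (auto simp: tmap_app intro: cpair_x0)
    qed
    have "(\<Sum>x\<in>Api (sk enum k). cpair (msG q) (dg @ [0]) (x @ [k]) * cpair (msH p) dH (tmap v (x @ [k])))
        = (\<Sum>x\<in>Api (sk enum k). ?f x + (if x = ?z then (if 1 \<le> k \<and> k \<le> 4 then ?f x * (cpair (msH p) dH (v (nat k)) - 1) else 0) else 0))"
      by (rule sum.cong[OF refl]) (auto simp: e1 e2 algebra_simps)
    also have "\<dots> = (\<Sum>x\<in>Api (sk enum k). ?f x) + (if 1 \<le> k \<and> k \<le> 4 then ?f ?z * (cpair (msH p) dH (v (nat k)) - 1) else 0)"
      using zero_Api finite_cgrp by (simp add: sum.distrib Api_def)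
    also have "?f ?z = 1" by (rule cpair_x0) simp
    finally show ?thesis by (simp add: sum_Api Nk_def)
  qed
  have "Fs enum q v p dg dH = (\<Sum>k\<in>{0..<q}. of_nat (6^4 * Nk enum dg k) + (if 1 \<le> k \<and> k \<le> 4 then cpair (msH p) dH (v (nat k)) - 1 else 0))"
    unfolding Fs_def sum_setA inner ..
  also have "\<dots> = of_nat (\<Sum>k\<in>{0..<q}. 6^4 * Nk enum dg k) + (\<Sum>k\<in>{0..<q}. if 1 \<le> k \<and> k \<le> 4 then cpair (msH p) dH (v (nat k)) - 1 else 0)"
    by (simp add: sum.distrib)
  also have "(\<Sum>k\<in>{0..<q}. if 1 \<le> k \<and> k \<le> 4 then cpair (msH p) dH (v (nat k)) - 1 else 0)
      = (\<Sum>k\<in>{1..4::int}. cpair (msH p) dH (v (nat k)) - 1)"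
  proof -
    have "{k\<in>{0..<q}. 1 \<le> k \<and> k \<le> 4} = {1..4}" using q by auto
    thus ?thesis by (simp add: sum.inter_filter[symmetric])
  qed
  finally show ?thesis .
qed

lemma cpair_H_eq1:
  assumes "p > 0"
  shows "cpair (msH p) d x = 1 \<longleftrightarrow> p dvd (\<Sum>i<4. d!i * x!i)"
proof -
  have "(\<Sum>i<length (msH p). of_int (d!i * x!i) / of_int (msH p ! i)) = (of_int (\<Sum>i<4. d!i * x!i) / of_int p :: real)"
    by (simp add: msH_def sum_divide_distrib)
  hence "cpair (msH p) d x = cis (2 * pi * of_int (\<Sum>i<4. d!i * x!i) / of_int p)"
    unfolding cpair_def by simp
  thus ?thesis using cis_int_eq_1[OF assms, of "\<Sum>i<4. d!i * x!i"] by simp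
qed

lemma basis_zero:
  assumes p: "p > 1" and bas: "basisH p v" and d: "d \<in> cgrp (msH p)"
    and dv: "\<forall>k\<in>{1..4}. p dvd (\<Sum>i<4. d!i * (v k)!i)"
  shows "d = replicate 4 0"
proof (rule nth_equalityI)
  show "length d = length (replicate 4 (0::int))" using d by (simp add: cgrp_def)
  fix i0 assume "i0 < length d" hence i0: "i0 < 4" using d by (simp add: cgrp_def)
  define e where "e = map (\<lambda>j. if j = i0 then (1::int) else 0) [0..<4]"
  have eH: "e \<in> cgrp (msH p)" using p by (auto simp: e_def cgrp_def msH_def)
  then obtain c where c: "lincombH p v c = e" using bas unfolding basisH_def by blast
  define X where "X i = (\<Sum>j\<in>{1..4}. c j * (v j)!i)" for i
  have eX: "e!i = X i mod p" if "i < 4" for i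
    using arg_cong[OF c, of "\<lambda>l. l!i"] that by (simp add: lincombH_def X_def)
  have "d!i0 = (\<Sum>i<4. d!i * e!i)"
  proof -
    have "(\<Sum>i<4. d!i * e!i) = (\<Sum>i<4. if i = i0 then d!i else 0)"
      by (rule sum.cong) (auto simp: e_def)
    also have "\<dots> = d!i0" using i0 by simp
    finally show ?thesis by simp
  qed
  moreover have "p dvd (\<Sum>i<4. d!i * e!i) - (\<Sum>i<4. d!i * X i)"
  proof -
    have "(\<Sum>i<4. d!i * e!i) - (\<Sum>i<4. d!i * X i) = (\<Sum>i<4. d!i * (X i mod p - X i))"
      by (simp add: eX sum_subtractf[symmetric] algebra_simps)
    also have "p dvd \<dots>"
      by (rule dvd_sum, rule dvd_mult) (metis dvd_minus_iff dvd_triv_left minus_diff_eq minus_mod_eq_mult_div)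
    finally show ?thesis .
  qed
  moreover have "p dvd (\<Sum>i<4. d!i * X i)"
  proof -
    have "(\<Sum>i<4. d!i * X i) = (\<Sum>j\<in>{1..4}. c j * (\<Sum>i<4. d!i * (v j)!i))"
      unfolding X_def by (simp add: sum_distrib_left sum_distrib_right algebra_simps) (rule sum.swap)
    also have "p dvd \<dots>" using dv by (intro dvd_sum) simp
    finally show ?thesis .
  qed
  ultimately have "p dvd d!i0" by (metis dvd_diff diff_add_cancel dvd_add)
  moreover have "0 \<le> d!i0" "d!i0 < p" using d i0 by (auto simp: cgrp_def msH_def)
  ultimately show "d!i0 = replicate 4 0 ! i0" using i0 zdvd_not_zless[of "d!i0" p] by (cases "d!i0 = 0") auto
qed

lemma Re_cpair: "Re (cpair ms c x) \<le> 1" "Re (cpair ms c x) \<ge> -1"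
  by (simp_all add: cpair_def)

lemma cpair_Re1: "Re (cpair ms c x) = 1 \<Longrightarrow> cpair ms c x = 1"
proof -
  assume h: "Re (cpair ms c x) = 1"
  obtain \<theta> where t: "cpair ms c x = cis \<theta>" by (simp add: cpair_def)
  hence "cos \<theta> = 1" using h by simp
  moreover have "(sin \<theta>)^2 + (cos \<theta>)^2 = 1" by simp
  ultimately have "sin \<theta> = 0" by simp
  thus ?thesis using t \<open>cos \<theta> = 1\<close> by (simp add: complex_eq_iff)
qed

lemma Fs_nonzero:
  assumes q: "q > 4" and dg: "length dg = 5" and p: "p > 1" and bas: "basisH p v"
    and dH: "dH \<in> cgrp (msH p)" "dH \<noteq> replicate 4 0"
  shows "Fs enum q v p dg dH \<noteq> 0"
proof
  assume F0: "Fs enum q v p dg dH = 0"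
  let ?N = "\<Sum>k\<in>{0..<q}. 6^4 * Nk enum dg k"
  let ?\<zeta> = "\<lambda>k. cpair (msH p) dH (v (nat k))"
  let ?Z = "\<Sum>k\<in>{1..4::int}. (?\<zeta> k - 1)"
  have F: "Fs enum q v p dg dH = of_nat ?N + ?Z" by (rule Fs_formula[OF dg q])
  have ReZ: "Re ?Z = (\<Sum>k\<in>{1..4::int}. Re (?\<zeta> k) - 1)" by (simp add: Re_sum)
  have ReZ_lb: "Re ?Z \<ge> -8"
  proof -
    have "(\<Sum>k\<in>{1..4::int}. Re (?\<zeta> k) - 1) \<ge> (\<Sum>k\<in>{1..4::int}. -2)"
    proof (rule sum_mono)
      fix k show "-2 \<le> Re (?\<zeta> k) - 1" using Re_cpair(2)[of "msH p" dH "v (nat k)"] by linarith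
    qed
    thus ?thesis using ReZ by simp
  qed
  show False
  proof (cases "?N = 0")
    case False
    have "?N = 6^4 * (\<Sum>k\<in>{0..<q}. Nk enum dg k)" by (simp add: sum_distrib_left)
    moreover obtain s where "s = (\<Sum>k\<in>{0..<q}. Nk enum dg k)" by simp
    ultimately have "?N = 1296 * s" "s \<noteq> 0" using False by auto
    hence "?N \<ge> 1296" by simp
    moreover obtain Nn where Nn: "Nn = ?N" by simp
    ultimately have "Nn \<ge> 1296" by simp
    moreover have "Re (Fs enum q v p dg dH) = real Nn + Re ?Z" unfolding F Nn[symmetric] by simp
    ultimately have "Re (Fs enum q v p dg dH) \<ge> 1296 - 8" using ReZ_lb by simp
    thus False using F0 by simp
  next
    case True
    hence "Re ?Z = 0" using F F0 by simp
    hence s0: "(\<Sum>k\<in>{1..4::int}. 1 - Re (?\<zeta> k)) = 0" using ReZ by (simp add: sum_subtractf)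
    have "\<forall>k\<in>{1..4::int}. 1 - Re (?\<zeta> k) = 0"
    proof -
      have "\<forall>k\<in>{1..4::int}. 0 \<le> 1 - Re (?\<zeta> k)" using Re_cpair(1) by (simp add: algebra_simps)
      thus ?thesis using sum_nonneg_eq_0_iff[THEN iffD1, OF _ _ s0] by auto
    qed
    hence z1: "\<forall>k\<in>{1..4::int}. ?\<zeta> k = 1" using cpair_Re1 by auto
    have "\<forall>k\<in>{1..4::nat}. p dvd (\<Sum>i<4. dH!i * (v k)!i)"
    proof
      fix k :: nat assume k: "k \<in> {1..4}"
      hence "int k \<in> {1..4}" by auto
      hence "cpair (msH p) dH (v k) = 1" using z1 by (metis nat_int)
      thus "p dvd (\<Sum>i<4. dH!i * (v k)!i)" using cpair_H_eq1 p by simp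
    qed
    hence "dH = replicate 4 0" using basis_zero[OF p bas dH(1)] by simp
    thus False using dH(2) by simp
  qed
qed

lemma cpair_H0: "cpair (msH p) (replicate 4 0) x = 1"
  by (rule cpair_zero) (simp add: msH_def)

lemma Fs_zero:
  assumes q: "q > 4" and dg: "length dg = 5" and F0: "Fs enum q v p dg (replicate 4 0) = 0"
    and k: "k \<in> {0..<q}"
  shows "Nk enum dg k = 0"
proof -
  have "Fs enum q v p dg (replicate 4 0) = of_nat (\<Sum>k\<in>{0..<q}. 6^4 * Nk enum dg k)"
    using Fs_formula[OF dg q] by (simp add: cpair_H0)
  with F0 have "(\<Sum>k\<in>{0..<q}. 6^4 * Nk enum dg k) = 0" by (metis of_nat_eq_0_iff)
  thus ?thesis using k by simp
qed

lemma perm_list: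
  assumes "length L = 5" "distinct L" "set L = {0..<5}"
  shows "(\<lambda>i. if i < 5 then L!i else i) permutes {0..<5}"
proof (rule bij_imp_permutes)
  show "bij_betw (\<lambda>i. if i < 5 then L!i else i) {0..<5} {0..<5}"
  proof (rule bij_betw_imageI)
    show "inj_on (\<lambda>i. if i < 5 then L!i else i) {0..<5}"
      using assms by (auto simp: inj_on_def nth_eq_iff_index_eq)
    have "(\<lambda>i. if i < 5 then L!i else i) ` {0..<5} = (\<lambda>i. L!i) ` {0..<length L}"
      using assms(1) by (auto simp: image_iff)
    also have "\<dots> = set L" by (simp add: set_conv_nth image_def) (metis atLeastLessThan_iff zero_le)
    finally show "(\<lambda>i. if i < 5 then L!i else i) ` {0..<5} = {0..<5}" using assms(3) by simp
  qed
qed auto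

lemma W_list: "length L = 5 \<Longrightarrow> W (\<lambda>i. if i < 5 then L!i else i) = map (\<lambda>x. int x + 1) L"
  by (auto simp: W_def intro!: nth_equalityI)

lemma msGH_explicit: "msGH q p = [6,6,6,6,6,q,p,p,p,p]"
  by (simp add: msGH_def msG_def msH_def numeral_eq_Suc)

lemma less10: "(i::nat) < 10 \<Longrightarrow> i = 0 \<or> i = 1 \<or> i = 2 \<or> i = 3 \<or> i = 4 \<or> i = 5 \<or> i = 6 \<or> i = 7 \<or> i = 8 \<or> i = 9"
  by arith

lemma csub_split:
  assumes s: "length s = 10" "length s' = 10" and e: "s!5 = s'!5"
  shows "csub (msGH q p) s s' = (csub (replicate 5 6) (take 5 s) (take 5 s') @ [0]) @ csub (msH p) (drop 6 s) (drop 6 s')"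
proof (rule nth_equalityI)
  show "length (csub (msGH q p) s s') = length ((csub (replicate 5 6) (take 5 s) (take 5 s') @ [0]) @ csub (msH p) (drop 6 s) (drop 6 s'))"
    by (simp add: csub_def)
  fix i assume "i < length (csub (msGH q p) s s')"
  hence "i < 10" by (simp add: csub_def)
  thus "csub (msGH q p) s s' ! i = ((csub (replicate 5 6) (take 5 s) (take 5 s') @ [0]) @ csub (msH p) (drop 6 s) (drop 6 s')) ! i"
    using s e by (elim less10[elim_format]) (auto simp: csub_def msGH_explicit msH_def nth_append numeral_eq_Suc)
qed

lemma tmap_len: "basisH p v \<Longrightarrow> length (tmap v a) = 4"
proof -
  assume b: "basisH p v"
  show ?thesis
  proof (cases "take 5 a = replicate 5 0 \<and> 1 \<le> a!5 \<and> a!5 \<le> 4")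
    case True
    hence "nat (a!5) \<in> {1..4}" by auto
    hence "v (nat (a!5)) \<in> cgrp (msH p)" using b unfolding basisH_def by blast
    thus ?thesis using True by (simp add: tmap_def cgrp_def)
  next
    case False thus ?thesis unfolding tmap_def by (subst if_not_P[OF False]) simp
  qed
qed

lemma Pt_inj:
  assumes A: "\<forall>a\<in>A. length a = 6" and B: "B \<subseteq> cgrp (msH p)"
  shows "inj_on (\<lambda>(a,b). a @ cadd (msH p) (t a) b) (A \<times> B)"
proof (rule inj_onI, clarify)
  fix a b a' b' assume h: "a \<in> A" "b \<in> B" "a' \<in> A" "b' \<in> B"
    and eq: "a @ cadd (msH p) (t a) b = a' @ cadd (msH p) (t a') b'"
  have "a = a'" using eq A h by (metis append_eq_append_conv)
  moreover from this have "b = b'" using eq B h by (intro cadd_inj[of b p b' "t a"]) auto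
  ultimately show "a = a' \<and> b = b'" by simp
qed

lemma msGH_nth: "i < 10 \<Longrightarrow> msGH q p ! i = (if i < 5 then 6 else if i = 5 then q else p)"
  unfolding msGH_explicit by (elim less10[elim_format]) auto

lemma cgrpGH: assumes "s \<in> cgrp (msGH q p)"
  shows "length s = 10 \<and> take 5 s \<in> G5 \<and> 0 \<le> s!5 \<and> s!5 < q \<and> drop 6 s \<in> cgrp (msH p)"
proof -
  have l: "length s = 10" and h: "\<And>i. i < 10 \<Longrightarrow> 0 \<le> s!i \<and> s!i < msGH q p ! i"
    using assms by (auto simp: cgrp_def)
  have "take 5 s \<in> G5"
  proof -
    have "0 \<le> s!i \<and> s!i < 6" if "i < 5" for i using h[of i] msGH_nth[of i] that by simp
    thus ?thesis using l by (auto simp: G5_mem)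
  qed
  moreover have "0 \<le> s!5 \<and> s!5 < q" using h[of 5] msGH_nth[of 5] by simp
  moreover have "drop 6 s \<in> cgrp (msH p)"
  proof -
    have "0 \<le> s!(6+i) \<and> s!(6+i) < p" if "i < 4" for i using h[of "6+i"] msGH_nth[of "6+i"] that by simp
    thus ?thesis using l by (auto simp: cgrp_def msH_def)
  qed
  ultimately show ?thesis using l by simp
qed

lemma csub_self_H: "length \<rho> = 4 \<Longrightarrow> csub (msH p) \<rho> \<rho> = replicate 4 0"
  by (auto simp: csub_def msH_def intro!: nth_equalityI)

lemma csub_H_zero:
  assumes "\<rho> \<in> cgrp (msH p)" "\<rho>' \<in> cgrp (msH p)" "csub (msH p) \<rho> \<rho>' = replicate 4 0"
  shows "\<rho> = \<rho>'"
proof (rule nth_equalityI)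
  show "length \<rho> = length \<rho>'" using assms by (simp add: cgrp_def)
  fix i assume "i < length \<rho>" hence i: "i < 4" using assms by (simp add: cgrp_def)
  have "(\<rho>!i - \<rho>'!i) mod p = 0" using arg_cong[OF assms(3), of "\<lambda>l. l!i"] i by (simp add: csub_def msH_def)
  moreover have "0 \<le> \<rho>!i" "\<rho>!i < p" "0 \<le> \<rho>'!i" "\<rho>'!i < p" using assms i by (auto simp: cgrp_def msH_def)
  ultimately show "\<rho>!i = \<rho>'!i" by (metis mod_eq_dvd_iff mod_pos_pos_trivial mod_0 diff_0_right) 
qed

lemma csub_H_mem: "p > 0 \<Longrightarrow> csub (msH p) \<rho> \<rho>' \<in> cgrp (msH p)"
  by (simp add: csub_def cgrp_def msH_def)

lemma split10: "length s = 10 \<Longrightarrow> s = take 5 s @ s!5 # drop 6 s"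
proof -
  assume l: "length s = 10"
  have "drop 5 s = s!5 # drop 6 s" using l Cons_nth_drop_Suc[of 5 s] by simp
  thus ?thesis by (metis append_take_drop_id)
qed

lemma HW_of_Nk:
  assumes D: "D \<subseteq> G5"
    and H: "\<forall>\<gamma>\<in>D. \<forall>\<gamma>'\<in>D. \<gamma> \<noteq> \<gamma>' \<longrightarrow> Nk enum (csub (replicate 5 6) \<gamma> \<gamma>') (int j) = 0"
    and j: "j < 120"
  shows "HW D (W (enum j))"
  unfolding HW_def
proof (intro ballI impI notI)
  fix \<gamma> \<gamma>' c assume g: "\<gamma> \<in> D" "\<gamma>' \<in> D" "\<gamma> \<noteq> \<gamma>'" and c: "c \<in> {0..<6::int}"
    and dv: "\<forall>i<5. 6 dvd \<gamma>!i - \<gamma>'!i + c * W (enum j) ! i"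
  let ?dg = "csub (replicate 5 6) \<gamma> \<gamma>'"
  define X where "X = {c\<in>{0..<6::int}. \<forall>i<5. (6::int) dvd (?dg!i + c * W (sk enum (int j)) ! i)}"
  have mem: "c \<in> X"
  proof -
    have "(6::int) dvd (?dg!i + c * W (enum j) ! i)" if i: "i < 5" for i
    proof -
      have "?dg!i = (\<gamma>!i - \<gamma>'!i) mod 6" using i by (simp add: csub_def)
      hence "(?dg!i + c * W (enum j) ! i) mod 6 = (\<gamma>!i - \<gamma>'!i + c * W (enum j) ! i) mod 6"
        by (simp add: mod_add_left_eq)
      thus ?thesis using dv i by (simp add: dvd_eq_mod_eq_0)
    qed
    thus ?thesis using c j by (simp add: sk_def X_def)
  qed
  have fin: "finite X" unfolding X_def by (rule finite_subset[of _ "{0..<6}"]) auto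
  have "card X \<noteq> 0"
  proof
    assume "card X = 0" hence "X = {}" using fin by simp
    thus False using mem by simp
  qed
  hence "Nk enum ?dg (int j) \<noteq> 0" unfolding Nk_def X_def .
  moreover have "Nk enum ?dg (int j) = 0" using mp[OF bspec[OF bspec[OF H g(1)] g(2)] g(3)] .
  ultimately show False by simp
qed

context
  fixes p q :: int and enum :: "nat \<Rightarrow> nat \<Rightarrow> nat" and B S :: "int list set" and v :: "nat \<Rightarrow> int list" and b0 :: "int list"
  assumes p1: "p > 1" and q120: "q > 120"
    and bij: "bij_betw enum {0..<120} {\<sigma>. \<sigma> permutes {0..<5}}"
    and Bsub: "B \<subseteq> cgrp (msH p)" and b0: "b0 \<in> B"
    and bas: "basisH p v"
    and Ssub: "S \<subseteq> cgrp (msGH q p)"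
    and orth: "\<forall>s\<in>S. \<forall>s'\<in>S. s \<noteq> s' \<longrightarrow>
        ft_ind (msGH q p) (Pt p (setA enum q) (tmap v) B) (csub (msGH q p) s s') = 0"
begin

lemma key_ft:
  assumes s: "s \<in> S" "s' \<in> S" and e: "s!5 = s'!5"
  shows "ft_ind (msGH q p) (Pt p (setA enum q) (tmap v) B) (csub (msGH q p) s s')
    = Fs enum q v p (csub (replicate 5 6) (take 5 s) (take 5 s')) (csub (msH p) (drop 6 s) (drop 6 s'))
      * ft_ind (msH p) B (csub (msH p) (drop 6 s) (drop 6 s'))"
proof -
  have l: "length s = 10" "length s' = 10" using s Ssub cgrpGH by blast+
  have ld: "length (csub (replicate 5 6) (take 5 s) (take 5 s') @ [0]) = 6" by (simp add: csub_def)
  show ?thesis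
    unfolding csub_split[OF l e] Fs_def
    by (rule ft_Pt[OF _ _ Bsub _ ld]) (use p1 setA_len tmap_len[OF bas] in auto)
qed

lemma fiber_bound: "card {s\<in>S. s!5 = c \<and> drop 6 s = \<rho>} \<le> 1295"
proof -
  define F where "F = {s\<in>S. s!5 = c \<and> drop 6 s = \<rho>}"
  define D where "D = take 5 ` F"
  have FS: "F \<subseteq> S" by (auto simp: F_def)
  have inj: "inj_on (take 5) F"
  proof (rule inj_onI)
    fix s s' assume h: "s \<in> F" "s' \<in> F" "take 5 s = take 5 s'"
    have l: "length s = 10" "length s' = 10" using h FS Ssub cgrpGH by blast+
    show "s = s'" using split10[OF l(1)] split10[OF l(2)] h by (auto simp: F_def)
  qed
  have DG: "D \<subseteq> G5" using FS Ssub cgrpGH by (auto simp: D_def)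
  have H: "\<forall>\<gamma>\<in>D. \<forall>\<gamma>'\<in>D. \<gamma> \<noteq> \<gamma>' \<longrightarrow> Nk enum (csub (replicate 5 6) \<gamma> \<gamma>') (int j) = 0" if j: "j < 120" for j
  proof (intro ballI impI)
    fix \<gamma> \<gamma>' assume g: "\<gamma> \<in> D" "\<gamma>' \<in> D" "\<gamma> \<noteq> \<gamma>'"
    then obtain s s' where ss: "s \<in> F" "s' \<in> F" "\<gamma> = take 5 s" "\<gamma>' = take 5 s'" by (auto simp: D_def)
    have sS: "s \<in> S" "s' \<in> S" using ss FS by auto
    have e: "s!5 = s'!5" and dr: "drop 6 s = \<rho>" "drop 6 s' = \<rho>" using ss by (auto simp: F_def)
    have "s \<noteq> s'" using g ss by auto
    hence z: "ft_ind (msGH q p) (Pt p (setA enum q) (tmap v) B) (csub (msGH q p) s s') = 0"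
      using orth sS by blast
    have \<rho>H: "\<rho> \<in> cgrp (msH p)" using sS(1) Ssub cgrpGH dr by blast
    hence l\<rho>: "length \<rho> = 4" by (simp add: cgrp_def)
    have "ft_ind (msH p) B (replicate 4 0) = of_nat (card B)"
      by (simp add: ft_ind_def cpair_H0)
    moreover have "card B \<noteq> 0" using b0 Bsub finite_subset[OF Bsub finite_cgrp] by auto
    ultimately have nz: "ft_ind (msH p) B (replicate 4 0) \<noteq> 0" by simp
    have "Fs enum q v p (csub (replicate 5 6) \<gamma> \<gamma>') (replicate 4 0) = 0"
      using z nz unfolding key_ft[OF sS e] dr csub_self_H[OF l\<rho>] ss by simp
    moreover have "int j \<in> {0..<q}" using j q120 by simp
    ultimately show "Nk enum (csub (replicate 5 6) \<gamma> \<gamma>') (int j) = 0"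
      by (intro Fs_zero[where q=q and v=v and p=p]) (use q120 in \<open>auto simp: csub_def\<close>)
  qed
  have HWL: "HW D (map (\<lambda>x. int x + 1) L)" if L: "length L = 5" "distinct L" "set L = {0..<5}" for L
  proof -
    have "(\<lambda>i. if i < 5 then L!i else i) \<in> {\<sigma>. \<sigma> permutes {0..<5}}" using perm_list[OF L] by simp
    hence "(\<lambda>i. if i < 5 then L!i else i) \<in> enum ` {0..<120}" using bij_betw_imp_surj_on[OF bij] by simp
    then obtain j where j: "j \<in> {0..<120}" "(\<lambda>i. if i < 5 then L!i else i) = enum j" by (rule imageE)
    have "HW D (W (enum j))" using HW_of_Nk[OF DG H] j by simp
    thus ?thesis using j(2) W_list[OF L(1)] by simp
  qed
  have "card D \<le> 1295"
    by (rule comb_main[OF DG]; (insert HWL[of "[2,0,3,1,4]"] HWL[of "[0,3,1,2,4]"] HWL[of "[0,1,2,4,3]"]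
         HWL[of "[0,3,1,4,2]"] HWL[of "[0,1,2,3,4]"] HWL[of "[0,2,3,1,4]"]; simp add: atLeastLessThan_nat_numeral insert_commute))
  moreover have "card D = card F" unfolding D_def by (rule card_image[OF inj])
  ultimately show ?thesis by (simp add: F_def)
qed

lemma layer_R: "card (drop 6 ` {s\<in>S. s!5 = c}) \<le> card B"
proof -
  define R where "R = drop 6 ` {s\<in>S. s!5 = c}"
  have RH: "R \<subseteq> cgrp (msH p)" using Ssub cgrpGH by (auto simp: R_def)
  have Bfin: "finite B" using finite_subset[OF Bsub finite_cgrp] .
  show ?thesis unfolding R_def[symmetric]
  proof (rule orth_bound[OF Bfin b0])
    show "\<forall>b\<in>B. length (msH p) \<le> length b" using Bsub by (auto simp: cgrp_def)
    show "\<forall>i<length (msH p). msH p ! i \<noteq> 0" using p1 by (simp add: msH_def)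
    show "finite R" using finite_subset[OF RH finite_cgrp] .
    show "\<forall>\<rho>\<in>R. length (msH p) \<le> length \<rho>" using RH by (auto simp: cgrp_def)
    show "\<forall>\<rho>\<in>R. \<forall>\<rho>'\<in>R. \<rho> \<noteq> \<rho>' \<longrightarrow> ft_ind (msH p) B (csub (msH p) \<rho> \<rho>') = 0"
    proof (intro ballI impI)
      fix \<rho> \<rho>' assume r: "\<rho> \<in> R" "\<rho>' \<in> R" "\<rho> \<noteq> \<rho>'"
      then obtain s s' where ss: "s \<in> S" "s' \<in> S" "s!5 = c" "s'!5 = c" "\<rho> = drop 6 s" "\<rho>' = drop 6 s'"
        by (auto simp: R_def)
      have "s \<noteq> s'" using ss r by auto
      hence z: "ft_ind (msGH q p) (Pt p (setA enum q) (tmap v) B) (csub (msGH q p) s s') = 0"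
        using orth ss by blast
      have e: "s!5 = s'!5" using ss by simp
      have dH: "csub (msH p) \<rho> \<rho>' \<in> cgrp (msH p)" using p1 by (intro csub_H_mem) simp
      have dH0: "csub (msH p) \<rho> \<rho>' \<noteq> replicate 4 0" using csub_H_zero r RH by blast
      have "Fs enum q v p (csub (replicate 5 6) (take 5 s) (take 5 s')) (csub (msH p) \<rho> \<rho>') \<noteq> 0"
        by (rule Fs_nonzero[OF _ _ p1 bas dH dH0]) (use q120 in \<open>auto simp: csub_def\<close>)
      thus "ft_ind (msH p) B (csub (msH p) \<rho> \<rho>') = 0"
        using z unfolding key_ft[OF ss(1,2) e] ss(5,6) by simp
    qed
  qed
qed

lemma layer: "card {s\<in>S. s!5 = c} \<le> card B * 1295"
proof -
  define R where "R = drop 6 ` {s\<in>S. s!5 = c}"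
  have RH: "R \<subseteq> cgrp (msH p)" using Ssub cgrpGH by (auto simp: R_def)
  have fR: "finite R" using finite_subset[OF RH finite_cgrp] .
  have "{s\<in>S. s!5 = c} = (\<Union>\<rho>\<in>R. {s\<in>S. s!5 = c \<and> drop 6 s = \<rho>})" by (auto simp: R_def)
  hence "card {s\<in>S. s!5 = c} \<le> (\<Sum>\<rho>\<in>R. card {s\<in>S. s!5 = c \<and> drop 6 s = \<rho>})"
    using card_UN_le[OF fR] by simp
  also have "\<dots> \<le> (\<Sum>\<rho>\<in>R. 1295)" by (rule sum_mono) (rule fiber_bound)
  also have "\<dots> = card R * 1295" by simp
  also have "\<dots> \<le> card B * 1295" using layer_R by (simp add: R_def)
  finally show ?thesis .
qed

lemma total: "card S \<le> nat q * (card B * 1295)"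
proof -
  have eq: "(\<Union>c\<in>{0..<q}. {s\<in>S. s!5 = c}) = S" using Ssub cgrpGH by fastforce
  have "card (\<Union>c\<in>{0..<q}. {s\<in>S. s!5 = c}) \<le> (\<Sum>c\<in>{0..<q}. card {s\<in>S. s!5 = c})"
    by (rule card_UN_le) simp
  hence "card S \<le> (\<Sum>c\<in>{0..<q}. card {s\<in>S. s!5 = c})" unfolding eq .
  also have "\<dots> \<le> (\<Sum>c\<in>{0..<q}. card B * 1295)" by (rule sum_mono) (rule layer)
  also have "\<dots> = nat q * (card B * 1295)" by simp
  finally show ?thesis .
qed

end

theorem lemma3p5:
  fixes p q :: nat and enum :: "nat \<Rightarrow> nat \<Rightarrow> nat"
    and B :: "int list set" and v :: "nat \<Rightarrow> int list"
  assumes "prime p" and "p > 3" and "prime q" and "q > 6 * p ^ 4"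
    and "bij_betw enum {0..<120} {\<sigma>. \<sigma> permutes {0..<5}}"
    and "spectral_in (msH (int p)) B" and "card B = 2 * p"
    and "basisH (int p) v"
  shows "\<not> spectral_in (msGH (int q) (int p))
           (Pt (int p) (setA enum (int q)) (tmap v) B)"
proof
  assume sp: "spectral_in (msGH (int q) (int p)) (Pt (int p) (setA enum (int q)) (tmap v) B)"
  let ?P = "Pt (int p) (setA enum (int q)) (tmap v) B"
  obtain S where S: "S \<subseteq> cgrp (msGH (int q) (int p))" "card S = card ?P"
    "\<forall>s\<in>S. \<forall>s'\<in>S. s \<noteq> s' \<longrightarrow> ft_ind (msGH (int q) (int p)) ?P (csub (msGH (int q) (int p)) s s') = 0"
    using sp unfolding spectral_in_def by blast
  have p1: "int p > 1" using assms(2) by simp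
  have "p ^ 4 \<ge> 4 ^ 4" using assms(2) by (intro power_mono) auto
  hence q120: "int q > 120" using assms(4) by simp
  have Bsub: "B \<subseteq> cgrp (msH (int p))" using assms(6) unfolding spectral_in_def by blast
  have "B \<noteq> {}" using assms(7) assms(2) by auto
  then obtain b0 where b0: "b0 \<in> B" by blast
  have tot: "card S \<le> nat (int q) * (card B * 1295)"
    by (rule total[OF p1 q120 assms(5) Bsub b0 assms(8) S(1) S(3)])
  have perms: "sk enum k permutes {0..<5}" for k
  proof -
    have "(if k < 120 then nat k else 0) \<in> {0..<120}" by auto
    thus ?thesis using bij_betwE[OF assms(5)] by (simp add: sk_def)
  qed
  have cA: "card (setA enum (int q)) = q * 6^4"
    using card_setA[of enum "int q", OF perms] by simp
  have cP: "card ?P = card (setA enum (int q)) * card B"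
    unfolding Pt_image
    by (subst card_image[OF Pt_inj[OF _ Bsub]]) (auto simp: card_cartesian_product setA_len)
  have "card S = q * 1296 * (2 * p)" using S(2) cP cA assms(7) by simp
  with tot assms(7) have "q * 1296 * (2 * p) \<le> q * (2 * p * 1295)" by simp
  moreover have "q * (2 * p * 1295) < q * 1296 * (2 * p)" using q120 assms(2) by simp
  ultimately show False by simp
qed

end
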